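(* For every integer $n\geq 1$ there are integers $\gamma^S_{n,k}$, $0\le k\le\lfloor (n-1)/2\rfloor$, such that $$S_n(t):=\sum_{\pi\in\mathfrak{S}_n(2413,3142)}t^{\mathrm{des}(\pi)}=\sum_{k=0}^{\lfloor\frac{n-1}{2}\rfloor}\gamma_{n,k}^S\, t^k (1+t)^{n-1-2k},$$ where $$\gamma_{n,k}^S=\#\{\pi \in \mathfrak{S}_n(3142, 2413): \mathrm{dd}(\pi)=0,\ \mathrm{des}(\pi)=k\}.$$ In particular, the polynomial $S_n(t)$ is $\gamma$-positive for $n\geq 1$, and hence palindromic and unimodal.
   Context: $\mathfrak{S}_n$ is the set of permutations of $[n]=\{1,\dots,n\}$, written in one-line notation $\pi=\pi_1\cdots\pi_n$. A permutation $\pi$ contains a pattern $\sigma$ if some (not necessarily consecutive) subsequence of $\pi$ has the same relative order as $\sigma$; otherwise it avoids $\sigma$. $\mathfrak{S}_n(2413,3142)$ is the set of permutations in $\mathfrak{S}_n$ avoiding both $2413$ and $3142$ (separable permutations). With the convention $\pi_0=\pi_{n+1}=+\infty$, an index $i\in[n]$ is a descent if $\pi_i>\pi_{i+1}$ and a double descent if $\pi_{i-1}>\pi_i>\pi_{i+1}$; $\mathrm{des}(\pi)$ and $\mathrm{dd}(\pi)$ denote the numbers of descents and double descents. A polynomial is $\gamma$-positive of darga $m$ if it can be written as $\sum_k \gamma_k t^k(1+t)^{m-2k}$ with all $\gamma_k\ge 0$. A polynomial $\sum h_it^i$ is unimodal if $h_0\le\cdots\le h_c\ge h_{c+1}\ge\cdots$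 for some $c$. *)

theory Defs
  imports "HOL-Combinatorics.Multiset_Permutations"
          "HOL-Computational_Algebra.Polynomial"
          "HOL-Library.Extended_Nat"
begin

text \<open>Permutations of [n] in one-line notation are lists w = [pi_1, ..., pi_n]
  (0-based list indexing: pi_i = w ! (i-1)).\<close>

definition contains_pattern :: "nat list \<Rightarrow> nat list \<Rightarrow> bool" where
  "contains_pattern w sigma \<longleftrightarrow>
     (\<exists>is. length is = length sigma \<and> sorted_wrt (<) is \<and> (\<forall>j\<in>set is. j < length w) \<and>
       (\<forall>a<length sigma. \<forall>b<length sigma. (w ! (is ! a) < w ! (is ! b) \<longleftrightarrow> sigma ! a < sigma ! b)))"

definition avoids :: "nat list \<Rightarrow> nat list \<Rightarrow> bool" where
  "avoids w sigma \<longleftrightarrow> \<not> contains_pattern w sigma"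

definition separable_perms :: "nat \<Rightarrow> nat list set" where
  "separable_perms n = {w \<in> permutations_of_set {1..n}. avoids w [2,4,1,3] \<and> avoids w [3,1,4,2]}"

definition pval :: "nat list \<Rightarrow> nat \<Rightarrow> enat" where
  "pval w i = (if 1 \<le> i \<and> i \<le> length w then enat (w ! (i - 1)) else \<infinity>)"

definition des :: "nat list \<Rightarrow> nat" where
  "des w = card {i \<in> {1..length w}. pval w i > pval w (i + 1)}"

definition dd :: "nat list \<Rightarrow> nat" where
  "dd w = card {i \<in> {1..length w}. pval w (i - 1) > pval w i \<and> pval w i > pval w (i + 1)}"

definition S_poly :: "nat \<Rightarrow> int poly" where
  "S_poly n = (\<Sum>w\<in>separable_perms n. monom 1 (des w))"

definition gammaS :: "nat \<Rightarrow> nat \<Rightarrow> nat" where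
  "gammaS n k = card {w \<in> separable_perms n. dd w = 0 \<and> des w = k}"

definition gamma_positive :: "int poly \<Rightarrow> nat \<Rightarrow> bool" where
  "gamma_positive p m \<longleftrightarrow>
     (\<exists>g :: nat \<Rightarrow> int. (\<forall>k. g k \<ge> 0) \<and>
        p = (\<Sum>k\<in>{0..m div 2}. smult (g k) (monom 1 k * [:1, 1:] ^ (m - 2 * k))))"

definition palindromic :: "int poly \<Rightarrow> nat \<Rightarrow> bool" where
  "palindromic p m \<longleftrightarrow> degree p \<le> m \<and> (\<forall>i\<le>m. coeff p i = coeff p (m - i))"

definition unimodal :: "int poly \<Rightarrow> bool" where
  "unimodal p \<longleftrightarrow> (\<exists>c\<le>degree p. (\<forall>i<c. coeff p i \<le> coeff p (i + 1)) \<and>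
                                   (\<forall>i. c \<le> i \<and> i < degree p \<longrightarrow> coeff p (i + 1) \<le> coeff p i))"

end

theory Submission
  imports Defs "HOL-Computational_Algebra.Formal_Power_Series"
begin

unbundle fps_syntax


definition c2413 :: "nat list \<Rightarrow> bool" where
  "c2413 w \<longleftrightarrow> (\<exists>i0 i1 i2 i3. i0 < i1 \<and> i1 < i2 \<and> i2 < i3 \<and> i3 < length w \<and>
      w!i2 < w!i0 \<and> w!i0 < w!i3 \<and> w!i3 < w!i1)"

definition c3142 :: "nat list \<Rightarrow> bool" where
  "c3142 w \<longleftrightarrow> (\<exists>i0 i1 i2 i3. i0 < i1 \<and> i1 < i2 \<and> i2 < i3 \<and> i3 < length w \<and>
      w!i1 < w!i3 \<and> w!i3 < w!i0 \<and> w!i0 < w!i2)"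

definition sepl :: "nat list \<Rightarrow> bool" where
  "sepl w \<longleftrightarrow> \<not> c2413 w \<and> \<not> c3142 w"

lemma all_less_4: "(\<forall>a<(4::nat). P a) \<longleftrightarrow> P 0 \<and> P 1 \<and> P 2 \<and> P 3"
  by (auto simp: less_Suc_eq numeral_eq_Suc)

lemma len4: "length xs = 4 \<Longrightarrow> \<exists>a b c d. xs = [a,b,c,d]"
  by (auto simp: numeral_eq_Suc length_Suc_conv)

lemma contains_pattern4:
  assumes "contains_pattern w sigma" "length sigma = 4"
  obtains a b c d where "a < b" "b < c" "c < d" "d < length w"
   "\<forall>x<4. \<forall>y<4. (w ! ([a,b,c,d] ! x) < w ! ([a,b,c,d] ! y) \<longleftrightarrow> sigma ! x < sigma ! y)"
proof -
  from assms(1) obtain "is" where l: "length is = length sigma" and s: "sorted_wrt (<) is"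
    and b: "\<forall>j\<in>set is. j < length w"
    and p: "\<forall>a<length sigma. \<forall>b<length sigma. (w ! (is ! a) < w ! (is ! b) \<longleftrightarrow> sigma ! a < sigma ! b)"
    unfolding contains_pattern_def by blast
  from len4 l assms(2) obtain a b c d where i: "is = [a,b,c,d]" by metis
  show ?thesis apply (rule that[of a b c d]) using s b p unfolding i assms(2) by auto
qed

lemma contains_2413: "contains_pattern w [2,4,1,3] \<longleftrightarrow> c2413 w"
proof
  assume "contains_pattern w [2,4,1,3]"
  then obtain a b c d where h: "a < b" "b < c" "c < d" "d < length w"
   and p: "\<forall>x<4. \<forall>y<4. (w ! ([a,b,c,d] ! x) < w ! ([a,b,c,d] ! y) \<longleftrightarrow> [2,4,1,3::nat] ! x < [2,4,1,3] ! y)"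
    by (rule contains_pattern4) simp
  have "w!c < w!a" using p[rule_format, of 2 0] by simp
  moreover have "w!a < w!d" using p[rule_format, of 0 3] by simp
  moreover have "w!d < w!b" using p[rule_format, of 3 1] by simp
  ultimately show "c2413 w" using h unfolding c2413_def by blast
next
  assume "c2413 w"
  then obtain a b c d where h: "a < b" "b < c" "c < d" "d < length w"
     "w!c < w!a" "w!a < w!d" "w!d < w!b" unfolding c2413_def by blast
  have "\<forall>x<4. \<forall>y<4. (w ! ([a,b,c,d] ! x) < w ! ([a,b,c,d] ! y) \<longleftrightarrow> [2,4,1,3::nat] ! x < [2,4,1,3] ! y)"
    unfolding all_less_4 using h(5-7) by simp
  moreover have "sorted_wrt (<) [a,b,c,d]" "\<forall>j\<in>set [a,b,c,d]. j < length w" using h by auto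
  ultimately show "contains_pattern w [2,4,1,3]" unfolding contains_pattern_def
    by (intro exI[of _ "[a,b,c,d]"]) simp
qed

lemma contains_3142: "contains_pattern w [3,1,4,2] \<longleftrightarrow> c3142 w"
proof
  assume "contains_pattern w [3,1,4,2]"
  then obtain a b c d where h: "a < b" "b < c" "c < d" "d < length w"
   and p: "\<forall>x<4. \<forall>y<4. (w ! ([a,b,c,d] ! x) < w ! ([a,b,c,d] ! y) \<longleftrightarrow> [3,1,4,2::nat] ! x < [3,1,4,2] ! y)"
    by (rule contains_pattern4) simp
  have "w!b < w!d" using p[rule_format, of 1 3] by simp
  moreover have "w!d < w!a" using p[rule_format, of 3 0] by simp
  moreover have "w!a < w!c" using p[rule_format, of 0 2] by simp
  ultimately show "c3142 w" using h unfolding c3142_def by blast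
next
  assume "c3142 w"
  then obtain a b c d where h: "a < b" "b < c" "c < d" "d < length w"
     "w!b < w!d" "w!d < w!a" "w!a < w!c" unfolding c3142_def by blast
  have "\<forall>x<4. \<forall>y<4. (w ! ([a,b,c,d] ! x) < w ! ([a,b,c,d] ! y) \<longleftrightarrow> [3,1,4,2::nat] ! x < [3,1,4,2] ! y)"
    unfolding all_less_4 using h(5-7) by simp
  moreover have "sorted_wrt (<) [a,b,c,d]" "\<forall>j\<in>set [a,b,c,d]. j < length w" using h by auto
  ultimately show "contains_pattern w [3,1,4,2]" unfolding contains_pattern_def
    by (intro exI[of _ "[a,b,c,d]"]) simp
qed

lemma separable_perms_sepl: "separable_perms n = {w \<in> permutations_of_set {1..n}. sepl w}"
  unfolding separable_perms_def sepl_def avoids_def contains_2413 contains_3142 by simp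

lemma lift_c2413:
  assumes "c2413 w'" "\<And>i. i < length w' \<Longrightarrow> g i < length w"
    "\<And>i j. i < j \<Longrightarrow> j < length w' \<Longrightarrow> g i < g j"
    "\<And>i j. i < length w' \<Longrightarrow> j < length w' \<Longrightarrow> (w'!i < w'!j \<longleftrightarrow> w!(g i) < w!(g j))"
  shows "c2413 w"
proof -
  obtain a b c d where h: "a < b" "b < c" "c < d" "d < length w'"
     "w'!c < w'!a" "w'!a < w'!d" "w'!d < w'!b" using assms(1) unfolding c2413_def by blast
  show ?thesis unfolding c2413_def
    apply (rule exI[of _ "g a"], rule exI[of _ "g b"], rule exI[of _ "g c"], rule exI[of _ "g d"])
    using h assms(2-4) by (meson less_trans)
qed

lemma lift_c3142:
  assumes "c3142 w'" "\<And>i. i < length w' \<Longrightarrow> g i < length w"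
    "\<And>i j. i < j \<Longrightarrow> j < length w' \<Longrightarrow> g i < g j"
    "\<And>i j. i < length w' \<Longrightarrow> j < length w' \<Longrightarrow> (w'!i < w'!j \<longleftrightarrow> w!(g i) < w!(g j))"
  shows "c3142 w"
proof -
  obtain a b c d where h: "a < b" "b < c" "c < d" "d < length w'"
     "w'!b < w'!d" "w'!d < w'!a" "w'!a < w'!c" using assms(1) unfolding c3142_def by blast
  show ?thesis unfolding c3142_def
    apply (rule exI[of _ "g a"], rule exI[of _ "g b"], rule exI[of _ "g c"], rule exI[of _ "g d"])
    using h assms(2-4) by (meson less_trans)
qed

lemma lift_sepl:
  assumes "sepl w" "\<And>i. i < length w' \<Longrightarrow> g i < length w"
    "\<And>i j. i < j \<Longrightarrow> j < length w' \<Longrightarrow> g i < g j"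
    "\<And>i j. i < length w' \<Longrightarrow> j < length w' \<Longrightarrow> (w'!i < w'!j \<longleftrightarrow> w!(g i) < w!(g j))"
  shows "sepl w'"
  using assms lift_c2413[of w' g w] lift_c3142[of w' g w] unfolding sepl_def by blast

lemma sepl_take: "sepl w \<Longrightarrow> sepl (take k w)"
  by (rule lift_sepl[where g=id]) auto

lemma sepl_drop: "sepl w \<Longrightarrow> sepl (drop k w)"
  by (rule lift_sepl[where g="\<lambda>i. k + i"]) auto

lemma sepl_map_mono:
  assumes "sepl w" "strict_mono (f :: nat \<Rightarrow> nat)"
  shows "sepl (map f w)"
  by (rule lift_sepl[where g=id and w="w"]) (use assms in \<open>auto simp: strict_mono_less\<close>)

lemma sepl_map_mono_iff:
  assumes "strict_mono (f :: nat \<Rightarrow> nat)"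
  shows "sepl (map f w) \<longleftrightarrow> sepl w"
proof
  assume "sepl (map f w)" thus "sepl w"
    by (rule lift_sepl[where g=id]) (use assms in \<open>auto simp: strict_mono_less\<close>)
next
  assume "sepl w" thus "sepl (map f w)" using sepl_map_mono assms by blast
qed

definition psplit :: "nat list \<Rightarrow> nat \<Rightarrow> bool" where
  "psplit w a \<longleftrightarrow> (\<forall>i j. i < a \<longrightarrow> a \<le> j \<longrightarrow> j < length w \<longrightarrow> w!i < w!j)"
definition msplit :: "nat list \<Rightarrow> nat \<Rightarrow> bool" where
  "msplit w a \<longleftrightarrow> (\<forall>i j. i < a \<longrightarrow> a \<le> j \<longrightarrow> j < length w \<longrightarrow> w!i > w!j)"

lemma c2413_split_cases:
  assumes "c2413 w"
  shows "c2413 (take a w) \<or> c2413 (drop a w) \<or>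
    (\<exists>i0 i1 i2 i3. i0 < i1 \<and> i1 < i2 \<and> i2 < i3 \<and> i3 < length w \<and>
      w!i2 < w!i0 \<and> w!i0 < w!i3 \<and> w!i3 < w!i1 \<and> i0 < a \<and> a \<le> i3)"
proof -
  obtain i0 i1 i2 i3 where h: "i0 < i1" "i1 < i2" "i2 < i3" "i3 < length w"
      "w!i2 < w!i0" "w!i0 < w!i3" "w!i3 < w!i1" using assms unfolding c2413_def by blast
  consider "i3 < a" | "a \<le> i0" | "i0 < a \<and> a \<le> i3" by linarith
  thus ?thesis
  proof cases
    case 1
    hence "c2413 (take a w)" unfolding c2413_def
      apply (rule_tac exI[of _ i0], rule_tac exI[of _ i1], rule_tac exI[of _ i2], rule_tac exI[of _ i3])
      using h by auto
    thus ?thesis by blast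
  next
    case 2
    hence "c2413 (drop a w)" unfolding c2413_def
      apply (rule_tac exI[of _ "i0-a"], rule_tac exI[of _ "i1-a"], rule_tac exI[of _ "i2-a"], rule_tac exI[of _ "i3-a"])
      using h by auto
    thus ?thesis by blast
  next
    case 3 thus ?thesis using h by blast
  qed
qed

lemma c3142_split_cases:
  assumes "c3142 w"
  shows "c3142 (take a w) \<or> c3142 (drop a w) \<or>
    (\<exists>i0 i1 i2 i3. i0 < i1 \<and> i1 < i2 \<and> i2 < i3 \<and> i3 < length w \<and>
      w!i1 < w!i3 \<and> w!i3 < w!i0 \<and> w!i0 < w!i2 \<and> i0 < a \<and> a \<le> i3)"
proof -
  obtain i0 i1 i2 i3 where h: "i0 < i1" "i1 < i2" "i2 < i3" "i3 < length w"
      "w!i1 < w!i3" "w!i3 < w!i0" "w!i0 < w!i2" using assms unfolding c3142_def by blast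
  consider "i3 < a" | "a \<le> i0" | "i0 < a \<and> a \<le> i3" by linarith
  thus ?thesis
  proof cases
    case 1
    hence "c3142 (take a w)" unfolding c3142_def
      apply (rule_tac exI[of _ i0], rule_tac exI[of _ i1], rule_tac exI[of _ i2], rule_tac exI[of _ i3])
      using h by auto
    thus ?thesis by blast
  next
    case 2
    hence "c3142 (drop a w)" unfolding c3142_def
      apply (rule_tac exI[of _ "i0-a"], rule_tac exI[of _ "i1-a"], rule_tac exI[of _ "i2-a"], rule_tac exI[of _ "i3-a"])
      using h by auto
    thus ?thesis by blast
  next
    case 3 thus ?thesis using h by blast
  qed
qed

lemma sepl_psplit:
  assumes "psplit w a" "sepl (take a w)" "sepl (drop a w)"
  shows "sepl w"
proof -
  have "\<not> c2413 w"
  proof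
    assume "c2413 w"
    then obtain i0 i1 i2 i3 where h: "i0 < i1" "i1 < i2" "i2 < i3" "i3 < length w"
      "w!i2 < w!i0" "w!i0 < w!i3" "w!i3 < w!i1" "i0 < a" "a \<le> i3"
      using c2413_split_cases[of w a] assms(2,3) unfolding sepl_def by blast
    show False
    proof (cases "i2 < a")
      case True thus False using h assms(1) unfolding psplit_def
        by (metis less_trans not_less_iff_gr_or_eq)
    next
      case False thus False using h assms(1) unfolding psplit_def
        by (metis less_trans not_less not_less_iff_gr_or_eq)
    qed
  qed
  moreover have "\<not> c3142 w"
  proof
    assume "c3142 w"
    then obtain i0 i1 i2 i3 where h: "i0 < i1" "i1 < i2" "i2 < i3" "i3 < length w"
      "w!i1 < w!i3" "w!i3 < w!i0" "w!i0 < w!i2" "i0 < a" "a \<le> i3"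
      using c3142_split_cases[of w a] assms(2,3) unfolding sepl_def by blast
    show False using h assms(1) unfolding psplit_def
        by (metis not_less_iff_gr_or_eq)
  qed
  ultimately show ?thesis unfolding sepl_def by blast
qed

lemma sepl_msplit:
  assumes "msplit w a" "sepl (take a w)" "sepl (drop a w)"
  shows "sepl w"
proof -
  have "\<not> c2413 w"
  proof
    assume "c2413 w"
    then obtain i0 i1 i2 i3 where h: "i0 < i1" "i1 < i2" "i2 < i3" "i3 < length w"
      "w!i2 < w!i0" "w!i0 < w!i3" "w!i3 < w!i1" "i0 < a" "a \<le> i3"
      using c2413_split_cases[of w a] assms(2,3) unfolding sepl_def by blast
    show False using h assms(1) unfolding msplit_def
        by (metis not_less_iff_gr_or_eq)
  qed
  moreover have "\<not> c3142 w"
  proof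
    assume "c3142 w"
    then obtain i0 i1 i2 i3 where h: "i0 < i1" "i1 < i2" "i2 < i3" "i3 < length w"
      "w!i1 < w!i3" "w!i3 < w!i0" "w!i0 < w!i2" "i0 < a" "a \<le> i3"
      using c3142_split_cases[of w a] assms(2,3) unfolding sepl_def by blast
    show False
    proof (cases "i1 < a")
      case True
      show False
      proof (cases "i2 < a")
        case True thus False using h \<open>i1 < a\<close> assms(1) unfolding msplit_def
          by (metis less_trans not_less_iff_gr_or_eq)
      next
        case False thus False using h \<open>i1 < a\<close> assms(1) unfolding msplit_def
          by (metis less_trans not_less not_less_iff_gr_or_eq)
      qed
    next
      case False thus False using h assms(1) unfolding msplit_def
        by (metis less_trans not_less not_less_iff_gr_or_eq)
    qed
  qed
  ultimately show ?thesis unfolding sepl_def by blast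
qed


definition plusdec :: "nat list \<Rightarrow> bool" where
  "plusdec w \<longleftrightarrow> (\<exists>k. 0 < k \<and> k < length w \<and> psplit w k)"
definition minusdec :: "nat list \<Rightarrow> bool" where
  "minusdec w \<longleftrightarrow> (\<exists>k. 0 < k \<and> k < length w \<and> msplit w k)"

lemma not_plus_and_minus: "plusdec w \<Longrightarrow> minusdec w \<Longrightarrow> False"
proof -
  assume "plusdec w" "minusdec w"
  then obtain k1 k2 where "0 < k1" "k1 < length w" "psplit w k1" "0 < k2" "k2 < length w" "msplit w k2"
    unfolding plusdec_def minusdec_def by blast
  hence "w!0 < w!(length w - 1)" "w!0 > w!(length w - 1)" unfolding psplit_def msplit_def by auto
  thus False by simp
qed

lemma remove_nth:
  assumes "p < length w" "i < length w - 1"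
  shows "(take p w @ drop (Suc p) w) ! i = (if i < p then w ! i else w ! Suc i)"
  using assms by (auto simp: nth_append min_def)

lemma decomp_aux:
  "length w = n \<Longrightarrow> distinct w \<Longrightarrow> sepl w \<Longrightarrow> 2 \<le> n \<Longrightarrow> plusdec w \<or> minusdec w"
proof (induction n arbitrary: w rule: less_induct)
  case (less n)
  show ?case
  proof (cases "n = 2")
    case True
    have "w!0 \<noteq> w!1" using less.prems True by (simp add: nth_eq_iff_index_eq)
    hence "w!0 < w!1 \<or> w!0 > w!1" by linarith
    thus ?thesis
    proof
      assume a: "w!0 < w!1"
      have "psplit w 1" unfolding psplit_def
      proof (intro allI impI)
        fix i j assume "i < (1::nat)" "1 \<le> j" "j < length w"
        hence "i = 0" "j = 1" using True less.prems by auto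
        thus "w!i < w!j" using a by simp
      qed
      thus ?thesis unfolding plusdec_def using True less.prems by auto
    next
      assume a: "w!0 > w!1"
      have "msplit w 1" unfolding msplit_def
      proof (intro allI impI)
        fix i j assume "i < (1::nat)" "1 \<le> j" "j < length w"
        hence "i = 0" "j = 1" using True less.prems by auto
        thus "w!i > w!j" using a by simp
      qed
      thus ?thesis unfolding minusdec_def using True less.prems by auto
    qed
  next
    case False
    hence n3: "3 \<le> n" using less.prems by linarith
    have ne: "w \<noteq> []" using less.prems by auto
    define m where "m = Max (set w)"
    have "m \<in> set w" unfolding m_def using ne by simp
    then obtain p where pl: "p < n" and wp: "w!p = m" using less.prems by (auto simp: in_set_conv_nth)
    have MAX: "w!i < w!p" if "i < n" "i \<noteq> p" for i
    proof -
      have "w!i \<le> m" unfolding m_def using that less.prems by simp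
      moreover have "w!i \<noteq> w!p" using that pl less.prems by (simp add: nth_eq_iff_index_eq)
      ultimately show ?thesis using wp by simp
    qed
    define w' where "w' = take p w @ drop (Suc p) w"
    have lw': "length w' = n - 1" unfolding w'_def using pl less.prems by auto
    have W: "w'!i = (if i < p then w!i else w!Suc i)" if "i < n - 1" for i
      unfolding w'_def using remove_nth[of p w i] that pl less.prems by simp
    have W1: "w'!i = w!i" if "i < n - 1" "i < p" for i using W that by simp
    have W2: "w'!i = w!Suc i" if "i < n - 1" "p \<le> i" for i using W that by simp
    have dw: "w = take p w @ w!p # drop (Suc p) w" using pl less.prems by (simp add: id_take_nth_drop)
    have "distinct (take p w @ w ! p # drop (Suc p) w)" by (subst dw[symmetric]) (rule less.prems(2))
    hence dw': "distinct w'" unfolding w'_def by auto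
    have sw': "sepl w'"
    proof (rule lift_sepl[where g="\<lambda>i. if i < p then i else Suc i" and w=w])
      show "sepl w" using less.prems by simp
      show "\<And>i. i < length w' \<Longrightarrow> (if i < p then i else Suc i) < length w" using lw' less.prems pl by auto
      show "\<And>i j. i < j \<Longrightarrow> j < length w' \<Longrightarrow> (if i < p then i else Suc i) < (if j < p then j else Suc j)" by auto
      show "\<And>i j. i < length w' \<Longrightarrow> j < length w' \<Longrightarrow> (w'!i < w'!j) = (w ! (if i < p then i else Suc i) < w ! (if j < p then j else Suc j))"
        using W lw' by auto
    qed
    have DW': "w'!i \<noteq> w'!j" if "i < n - 1" "j < n - 1" "i \<noteq> j" for i j
      using dw' that lw' by (simp add: nth_eq_iff_index_eq)
    have IH: "plusdec w' \<or> minusdec w'"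
      using less.IH[of "n - 1" w'] lw' dw' sw' n3 by simp
    thus ?thesis
    proof
      assume "plusdec w'"
      then obtain k where k: "0 < k" "k < n - 1" and ps: "psplit w' k" unfolding plusdec_def using lw' by auto
      have PS: "w'!i < w'!j" if "i < k" "k \<le> j" "j < n - 1" for i j using ps that lw' unfolding psplit_def by auto
      show ?thesis
      proof (cases "k \<le> p")
        case True
        have "psplit w k" unfolding psplit_def
        proof (intro allI impI)
          fix i j assume h: "i < k" "k \<le> j" "j < length w"
          consider "j = p" | "j < p" | "p < j" by linarith
          thus "w!i < w!j"
          proof cases
            case 1 thus ?thesis using MAX[of i] h True less.prems by auto
          next
            case 2 thus ?thesis using PS[of i j] W1[of i] W1[of j] h True less.prems pl by auto
          next
            case 3 thus ?thesis using PS[of i "j - 1"] W1[of i] W2[of "j-1"] h True less.prems by auto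
          qed
        qed
        thus ?thesis unfolding plusdec_def using k less.prems by auto
      next
        case False
        show ?thesis
        proof (cases "p = 0")
          case True
          have "msplit w 1" unfolding msplit_def using MAX True less.prems by auto
          thus ?thesis unfolding minusdec_def using n3 less.prems by auto
        next
          case p0: False
          show ?thesis
          proof (cases "\<exists>i1 i2. i1 < p \<and> p \<le> i2 \<and> i2 < k \<and> w'!i2 < w'!i1")
            case True
            then obtain i1 i2 where h: "i1 < p" "p \<le> i2" "i2 < k" "w'!i2 < w'!i1" by blast
            have "c2413 w" unfolding c2413_def
              apply (rule exI[of _ i1], rule exI[of _ p], rule exI[of _ "Suc i2"], rule exI[of _ "Suc k"])
              using h k False less.prems W1[of i1] W2[of i2] W2[of k] PS[of i1 k] MAX[of "Suc k"]
              by auto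
            thus ?thesis using less.prems unfolding sepl_def by blast
          next
            case nc: False
            have "psplit w p" unfolding psplit_def
            proof (intro allI impI)
              fix i j assume h: "i < p" "p \<le> j" "j < length w"
              show "w!i < w!j"
              proof (cases "j = p")
                case True thus ?thesis using MAX[of i] h pl by auto
              next
                case jp: False
                have wj: "w!j = w'!(j-1)" using W2[of "j - 1"] h jp less.prems by auto
                have wi: "w!i = w'!i" using W1[of i] h pl by auto
                show ?thesis
                proof (cases "j - 1 < k")
                  case True
                  have "\<not> w'!(j-1) < w'!i" using nc True h jp by auto
                  moreover have "w'!(j-1) \<noteq> w'!i" using DW'[of "j-1" i] h jp less.prems by auto
                  ultimately show ?thesis using wi wj by auto
                next
                  case False thus ?thesis using PS[of i "j-1"] wi wj h jp less.prems \<open>\<not> k \<le> p\<close> by auto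
                qed
              qed
            qed
            thus ?thesis unfolding plusdec_def using p0 pl less.prems by auto
          qed
        qed
      qed
    next
      assume "minusdec w'"
      then obtain k where k: "0 < k" "k < n - 1" and ms: "msplit w' k" unfolding minusdec_def using lw' by auto
      have MS: "w'!i > w'!j" if "i < k" "k \<le> j" "j < n - 1" for i j using ms that lw' unfolding msplit_def by auto
      show ?thesis
      proof (cases "p \<le> k")
        case True
        have "msplit w (Suc k)" unfolding msplit_def
        proof (intro allI impI)
          fix i j assume h: "i < Suc k" "Suc k \<le> j" "j < length w"
          have wj: "w!j = w'!(j-1)" using W2[of "j - 1"] h True less.prems by auto
          consider "i = p" | "i < p" | "p < i" by linarith
          thus "w!i > w!j"
          proof cases
            case 1 thus ?thesis using MAX[of j] h True less.prems by auto
          next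
            case 2 thus ?thesis using MS[of i "j - 1"] W1[of i] wj h True less.prems by auto
          next
            case 3 thus ?thesis using MS[of "i - 1" "j - 1"] W2[of "i-1"] wj h True less.prems by auto
          qed
        qed
        moreover have "0 < Suc k" "Suc k < length w" using k less.prems by auto
        ultimately show ?thesis unfolding minusdec_def by blast
      next
        case False
        show ?thesis
        proof (cases "p = n - 1")
          case True
          have "psplit w (n - 1)" unfolding psplit_def
          proof (intro allI impI)
            fix i j assume h: "i < n - 1" "n - 1 \<le> j" "j < length w"
            hence "j = p" using True less.prems by auto
            thus "w!i < w!j" using MAX[of i] h by auto
          qed
          moreover have "0 < n - 1" "n - 1 < length w" using n3 less.prems by auto
          ultimately show ?thesis unfolding plusdec_def by blast
        next
          case pn: False
          show ?thesis
          proof (cases "\<exists>i1 i2. k \<le> i1 \<and> i1 < p \<and> p \<le> i2 \<and> i2 < n - 1 \<and> w'!i1 < w'!i2")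
            case True
            then obtain i1 i2 where h: "k \<le> i1" "i1 < p" "p \<le> i2" "i2 < n - 1" "w'!i1 < w'!i2" by blast
            have "c3142 w" unfolding c3142_def
              apply (rule exI[of _ 0], rule exI[of _ i1], rule exI[of _ p], rule exI[of _ "Suc i2"])
              using h k False less.prems W1[of i1] W2[of i2] W1[of 0] MS[of 0 i2] MAX[of 0]
              by auto
            thus ?thesis using less.prems unfolding sepl_def by blast
          next
            case nc: False
            have "msplit w (Suc p)" unfolding msplit_def
            proof (intro allI impI)
              fix i j assume h: "i < Suc p" "Suc p \<le> j" "j < length w"
              have wj: "w!j = w'!(j-1)" using W2[of "j - 1"] h less.prems by auto
              show "w!i > w!j"
              proof (cases "i = p")
                case True thus ?thesis using MAX[of j] h less.prems by auto
              next
                case ip: False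
                have wi: "w!i = w'!i" using W1[of i] h ip pl less.prems by auto
                show ?thesis
                proof (cases "i < k")
                  case True thus ?thesis using MS[of i "j-1"] wi wj h \<open>\<not> p \<le> k\<close> less.prems by auto
                next
                  case False
                  have "\<not> w'!i < w'!(j-1)" using nc False h ip less.prems by auto
                  moreover have "w'!(j-1) \<noteq> w'!i" using DW'[of "j-1" i] h ip less.prems by auto
                  ultimately show ?thesis using wi wj by auto
                qed
              qed
            qed
            moreover have "0 < Suc p" "Suc p < length w" using pl pn less.prems by auto
            ultimately show ?thesis unfolding minusdec_def by blast
          qed
        qed
      qed
    qed
  qed
qed

lemma decomp:
  "distinct w \<Longrightarrow> sepl w \<Longrightarrow> 2 \<le> length w \<Longrightarrow> plusdec w \<or> minusdec w"
  using decomp_aux by blast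


abbreviation perms :: "nat \<Rightarrow> nat list set" where
  "perms n \<equiv> permutations_of_set {1..n}"

lemma perms_iff: "w \<in> permutations_of_set A \<longleftrightarrow> set w = A \<and> distinct w"
  by (simp add: permutations_of_set_def)

lemma perms_length: "w \<in> perms n \<Longrightarrow> length w = n"
  using length_finite_permutations_of_set by fastforce

lemma perms_vals: "w \<in> perms n \<Longrightarrow> i < length w \<Longrightarrow> 1 \<le> w!i \<and> w!i \<le> n"
  using nth_mem[of i w] by (auto simp: perms_iff)

definition dsum :: "nat list \<Rightarrow> nat list \<Rightarrow> nat list" where
  "dsum a b = a @ map (\<lambda>x. x + length a) b"

lemma dsum_perms:
  assumes "a \<in> perms m" "b \<in> perms k"
  shows "dsum a b \<in> perms (m + k)"
proof -
  have la: "length a = m" using perms_length assms by blast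
  have sa: "set a = {1..m}" "distinct a" "set b = {1..k}" "distinct b" using assms by (auto simp: perms_iff)
  have "set (map (\<lambda>x. x + m) b) = {m+1..m+k}"
  proof -
    have "(\<lambda>x. x + m) ` {1..k} = {m+1..m+k}"
      by (auto simp: image_iff intro!: bexI[where x="_ - m"])
    thus ?thesis using sa by simp
  qed
  moreover have "distinct (map (\<lambda>x. x + m) b)" using sa by (simp add: distinct_map inj_on_def)
  ultimately show ?thesis unfolding dsum_def la using sa by (auto simp: perms_iff)
qed

lemma dsum_nth:
  "i < length a + length b \<Longrightarrow> dsum a b ! i = (if i < length a then a!i else b!(i - length a) + length a)"
  unfolding dsum_def by (auto simp: nth_append)

lemma dsum_psplit:
  assumes "a \<in> perms m" "b \<in> perms k"
  shows "psplit (dsum a b) m"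
  unfolding psplit_def
proof (intro allI impI)
  fix i j assume h: "i < m" "m \<le> j" "j < length (dsum a b)"
  have la: "length a = m" "length b = k" using perms_length assms by auto
  have "dsum a b ! i = a ! i" using h la by (simp add: dsum_nth)
  moreover have "dsum a b ! j = b!(j-m) + m" using h la by (simp add: dsum_def nth_append)
  moreover have "a!i \<le> m" using perms_vals[OF assms(1)] h la by auto
  moreover have "1 \<le> b!(j-m)" using perms_vals[OF assms(2), of "j - m"] h la by (simp add: dsum_def)
  ultimately show "dsum a b ! i < dsum a b ! j" by simp
qed

lemma sepl_dsum:
  assumes "a \<in> perms m" "b \<in> perms k" "sepl a" "sepl b"
  shows "sepl (dsum a b)"
proof (rule sepl_psplit[OF dsum_psplit[OF assms(1,2)]])
  have la: "length a = m" using perms_length assms by auto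
  show "sepl (take m (dsum a b))" using la assms by (simp add: dsum_def)
  have "strict_mono (\<lambda>x::nat. x + m)" by (simp add: strict_mono_def)
  thus "sepl (drop m (dsum a b))" using la assms sepl_map_mono_iff by (simp add: dsum_def)
qed

lemma psplit_take_vals:
  assumes "w \<in> perms n" "psplit w k" "k \<le> n"
  shows "set (take k w) = {1..k}"
proof -
  have lw: "length w = n" using perms_length assms by auto
  have dw: "distinct w" and sw: "set w = {1..n}" using assms by (auto simp: perms_iff)
  have sub: "set (take k w) \<subseteq> {1..k}"
  proof
    fix x assume "x \<in> set (take k w)"
    then obtain i where i: "i < k" "x = w!i" using lw assms(3) by (auto simp: in_set_conv_nth)
    have x1: "1 \<le> x" "x \<le> n" using perms_vals[OF assms(1), of i] i lw assms(3) by auto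
    have "set (drop k w) \<subseteq> {x<..n}"
    proof
      fix y assume "y \<in> set (drop k w)"
      then obtain j where j: "j < n - k" "y = w!(k+j)" using lw by (auto simp: in_set_conv_nth)
      have "x < y" using assms(2) i j lw unfolding psplit_def by auto
      moreover have "y \<le> n" using perms_vals[OF assms(1), of "k+j"] j lw by auto
      ultimately show "y \<in> {x<..n}" by auto
    qed
    hence "card (set (drop k w)) \<le> card {x<..n}" by (intro card_mono) auto
    moreover have "card (set (drop k w)) = n - k" using dw lw by (simp add: distinct_card)
    ultimately have "x \<le> k" using x1 by simp
    thus "x \<in> {1..k}" using x1 by simp
  qed
  moreover have "card (set (take k w)) = k" using dw lw assms(3) by (simp add: distinct_card)
  ultimately show ?thesis by (simp add: card_subset_eq)
qed

lemma psplit_decomp: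
  assumes "w \<in> perms n" "psplit w k" "k \<le> n"
  shows "take k w \<in> perms k" "map (\<lambda>x. x - k) (drop k w) \<in> perms (n - k)"
    "dsum (take k w) (map (\<lambda>x. x - k) (drop k w)) = w"
    "\<And>y. y \<in> set (drop k w) \<Longrightarrow> k < y"
proof -
  have lw: "length w = n" using perms_length assms by auto
  have dw: "distinct w" and sw: "set w = {1..n}" using assms by (auto simp: perms_iff)
  have st: "set (take k w) = {1..k}" by (rule psplit_take_vals[OF assms])
  show "take k w \<in> perms k" using st dw by (simp add: perms_iff)
  have sd: "set (drop k w) = {k<..n}"
  proof -
    have "set (take k w) \<union> set (drop k w) = {1..n}" using sw by (metis append_take_drop_id set_append)
    moreover have "set (take k w) \<inter> set (drop k w) = {}" using dw
      by (metis append_take_drop_id distinct_append)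
    ultimately have U: "\<And>x. x \<in> set (drop k w) \<longleftrightarrow> x \<in> {1..n} \<and> x \<notin> {1..k}" using st by blast
    show ?thesis
    proof (rule set_eqI)
      fix x show "x \<in> set (drop k w) \<longleftrightarrow> x \<in> {k<..n}" unfolding U using assms(3) by auto
    qed
  qed
  show gt: "\<And>y. y \<in> set (drop k w) \<Longrightarrow> k < y" using sd by auto
  have "set (map (\<lambda>x. x - k) (drop k w)) = {1..n-k}"
  proof -
    have "(\<lambda>x. x - k) ` {k<..n} = {1..n-k}"
      by (auto simp: image_iff intro!: bexI[where x="_ + k"])
    thus ?thesis using sd by simp
  qed
  moreover have "distinct (map (\<lambda>x. x - k) (drop k w))"
  proof -
    have "inj_on (\<lambda>x. x - k) (set (drop k w))"
    proof (rule inj_onI)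
      fix x y assume "x \<in> set (drop k w)" "y \<in> set (drop k w)" "x - k = y - k"
      thus "x = y" using gt[of x] gt[of y] by simp
    qed
    thus ?thesis using dw by (simp add: distinct_map)
  qed
  ultimately show "map (\<lambda>x. x - k) (drop k w) \<in> perms (n - k)" by (simp add: perms_iff)
  have "map (\<lambda>x. x - k + k) (drop k w) = drop k w"
  proof (intro map_idI)
    fix x assume "x \<in> set (drop k w)" thus "x - k + k = x" using gt[of x] by simp
  qed
  thus "dsum (take k w) (map (\<lambda>x. x - k) (drop k w)) = w"
    unfolding dsum_def using lw assms(3) by (simp add: comp_def)
qed

lemma sepl_drop_shift:
  assumes "sepl w" "\<And>y. y \<in> set (drop k w) \<Longrightarrow> k < y"
  shows "sepl (map (\<lambda>x. x - k) (drop k w))"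
proof (rule lift_sepl[where g=id and w="drop k w"])
  show "sepl (drop k w)" using sepl_drop assms by blast
  fix i j assume "i < length (map (\<lambda>x. x - k) (drop k w))" "j < length (map (\<lambda>x. x - k) (drop k w))"
  moreover hence "k < drop k w ! i" "k < drop k w ! j" using assms(2) nth_mem
    by (metis length_map)+
  ultimately show "(map (\<lambda>x. x - k) (drop k w) ! i < map (\<lambda>x. x - k) (drop k w) ! j) =
           (drop k w ! id i < drop k w ! id j)" by auto
qed auto

definition cpl :: "nat \<Rightarrow> nat list \<Rightarrow> nat list" where
  "cpl n w = map (\<lambda>x. Suc n - x) w"

lemma cpl_perms: "w \<in> perms n \<Longrightarrow> cpl n w \<in> perms n"
proof -
  assume w: "w \<in> perms n"
  have "(\<lambda>x. Suc n - x) ` {1..n} = {1..n}"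
  proof
    show "(\<lambda>x. Suc n - x) ` {1..n} \<subseteq> {1..n}" by auto
    show "{1..n} \<subseteq> (\<lambda>x. Suc n - x) ` {1..n}"
    proof
      fix x assume "x \<in> {1..(n::nat)}"
      thus "x \<in> (\<lambda>x. Suc n - x) ` {1..n}" by (intro image_eqI[where x="Suc n - x"]) auto
    qed
  qed
  moreover have "inj_on (\<lambda>x. Suc n - x) {1..n}" by (auto simp: inj_on_def)
  ultimately show ?thesis using w by (auto simp: perms_iff cpl_def distinct_map)
qed

lemma cpl_comp: "w \<in> perms n \<Longrightarrow> cpl n (cpl n w) = w"
  unfolding cpl_def by (auto simp: perms_iff intro!: map_idI)

lemma cpl_nth_less:
  assumes "w \<in> perms n" "i < length w" "j < length w"
  shows "cpl n w ! i < cpl n w ! j \<longleftrightarrow> w!j < w!i"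
  using perms_vals[OF assms(1,2)] perms_vals[OF assms(1,3)] assms by (auto simp: cpl_def)

lemma cpl_length[simp]: "length (cpl n w) = length w" by (simp add: cpl_def)

lemma c2413_cpl:
  assumes w: "w \<in> perms n"
  shows "c2413 (cpl n w) \<longleftrightarrow> c3142 w"
proof
  assume "c2413 (cpl n w)"
  then obtain a b c d where h: "a < b" "b < c" "c < d" "d < length w"
    "cpl n w!c < cpl n w!a" "cpl n w!a < cpl n w!d" "cpl n w!d < cpl n w!b"
    unfolding c2413_def by auto
  have l: "a < length w" "b < length w" "c < length w" using h by auto
  have "w!b < w!d" "w!d < w!a" "w!a < w!c" using h l cpl_nth_less[OF w] by auto
  thus "c3142 w" unfolding c3142_def using h by blast
next
  assume "c3142 w"
  then obtain a b c d where h: "a < b" "b < c" "c < d" "d < length w"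
    "w!b < w!d" "w!d < w!a" "w!a < w!c" unfolding c3142_def by auto
  have l: "a < length w" "b < length w" "c < length w" using h by auto
  have "cpl n w!c < cpl n w!a" "cpl n w!a < cpl n w!d" "cpl n w!d < cpl n w!b"
    using h l cpl_nth_less[OF w, of c a] cpl_nth_less[OF w, of a d] cpl_nth_less[OF w, of d b] by simp_all
  thus "c2413 (cpl n w)" unfolding c2413_def using h by auto
qed

lemma c3142_cpl:
  assumes w: "w \<in> perms n"
  shows "c3142 (cpl n w) \<longleftrightarrow> c2413 w"
proof
  assume "c3142 (cpl n w)"
  then obtain a b c d where h: "a < b" "b < c" "c < d" "d < length w"
    "cpl n w!b < cpl n w!d" "cpl n w!d < cpl n w!a" "cpl n w!a < cpl n w!c"
    unfolding c3142_def by auto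
  have l: "a < length w" "b < length w" "c < length w" using h by auto
  have "w!c < w!a" "w!a < w!d" "w!d < w!b" using h l cpl_nth_less[OF w] by auto
  thus "c2413 w" unfolding c2413_def using h by blast
next
  assume "c2413 w"
  then obtain a b c d where h: "a < b" "b < c" "c < d" "d < length w"
    "w!c < w!a" "w!a < w!d" "w!d < w!b" unfolding c2413_def by auto
  have l: "a < length w" "b < length w" "c < length w" using h by auto
  have "cpl n w!b < cpl n w!d" "cpl n w!d < cpl n w!a" "cpl n w!a < cpl n w!c"
    using h l cpl_nth_less[OF w, of b d] cpl_nth_less[OF w, of d a] cpl_nth_less[OF w, of a c] by simp_all
  thus "c3142 (cpl n w)" unfolding c3142_def using h by auto
qed

lemma sepl_cpl: "w \<in> perms n \<Longrightarrow> sepl (cpl n w) \<longleftrightarrow> sepl w"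
  unfolding sepl_def using c2413_cpl c3142_cpl by blast

lemma psplit_cpl:
  assumes w: "w \<in> perms n"
  shows "psplit (cpl n w) k \<longleftrightarrow> msplit w k"
  unfolding psplit_def msplit_def
proof (intro iffI allI impI)
  fix i j assume "\<forall>i j. i < k \<longrightarrow> k \<le> j \<longrightarrow> j < length (cpl n w) \<longrightarrow> cpl n w ! i < cpl n w ! j"
    "i < k" "k \<le> j" "j < length w"
  thus "w ! j < w ! i" using cpl_nth_less[OF w, of i j] by auto
next
  fix i j assume "\<forall>i j. i < k \<longrightarrow> k \<le> j \<longrightarrow> j < length w \<longrightarrow> w ! j < w ! i"
    "i < k" "k \<le> j" "j < length (cpl n w)"
  thus "cpl n w ! i < cpl n w ! j" using cpl_nth_less[OF w, of i j] by auto
qed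

lemma plusdec_cpl: "w \<in> perms n \<Longrightarrow> plusdec (cpl n w) \<longleftrightarrow> minusdec w"
  unfolding plusdec_def minusdec_def using psplit_cpl by simp


definition lb :: "bool \<Rightarrow> nat list \<Rightarrow> nat \<Rightarrow> bool" where
  "lb L w i = (if i = 0 then L else w!(i - 1) > w!i)"
definition rb :: "bool \<Rightarrow> nat list \<Rightarrow> nat \<Rightarrow> bool" where
  "rb R w i = (if Suc i = length w then R else w!(Suc i) > w!i)"
definition wt :: "(bool \<Rightarrow> bool \<Rightarrow> int) \<Rightarrow> bool \<Rightarrow> bool \<Rightarrow> nat list \<Rightarrow> int" where
  "wt f L R w = (\<Prod>i = 0..<length w. f (lb L w i) (rb R w i))"

lemma wt_psplit:
  assumes "a \<noteq> []" "c \<noteq> []" "psplit (a @ c) (length a)"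
  shows "wt f L R (a @ c) = wt f L True a * wt f False R c"
proof -
  let ?w = "a @ c" let ?la = "length a" let ?lc = "length c"
  let ?g = "\<lambda>i. f (lb L ?w i) (rb R ?w i)"
  have P: "a!i < c!j" if "i < ?la" "j < ?lc" for i j
    using assms(3) that unfolding psplit_def by (metis add.commute le_add1 length_append nat_add_left_cancel_less nth_append nth_append_length_plus)
  have "wt f L R ?w = prod ?g {0..<?la} * prod ?g {?la..<?la + ?lc}"
    unfolding wt_def by (simp add: prod.atLeastLessThan_concat)
  also have "prod ?g {0..<?la} = wt f L True a"
    unfolding wt_def
  proof (rule prod.cong)
    fix i assume i: "i \<in> {0..<?la}"
    have "lb L ?w i = lb L a i" using i unfolding lb_def by (auto simp: nth_append)
    moreover have "rb R ?w i = rb True a i"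
    proof (cases "Suc i = ?la")
      case True
      hence "?w ! Suc i = c!0" "?w!i = a!i" using i by (auto simp: nth_append)
      thus ?thesis using True assms(2) P[of i 0] i unfolding rb_def by auto
    next
      case False thus ?thesis using i unfolding rb_def by (auto simp: nth_append)
    qed
    ultimately show "?g i = f (lb L a i) (rb True a i)" by simp
  qed simp
  also have "prod ?g {?la..<?la + ?lc} = wt f False R c"
  proof -
    have "prod ?g {?la..<?la + ?lc} = prod ?g {0 + ?la..<?lc + ?la}" by (simp add: add.commute)
    also have "\<dots> = (\<Prod>j = 0..<?lc. ?g (j + ?la))" by (rule prod.shift_bounds_nat_ivl)
    also have "\<dots> = wt f False R c" unfolding wt_def
    proof (rule prod.cong)
      fix j assume j: "j \<in> {0..<?lc}"
      have "lb L ?w (j + ?la) = lb False c j"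
      proof (cases "j = 0")
        case True
        hence "?w ! (j + ?la - 1) = a!(?la - 1)" "?w!(j + ?la) = c!0" using assms(1) by (auto simp: nth_append)
        thus ?thesis using True assms P[of "?la - 1" 0] unfolding lb_def by auto
      next
        case False thus ?thesis using j unfolding lb_def by (auto simp: nth_append)
      qed
      moreover have "rb R ?w (j + ?la) = rb R c j" using j unfolding rb_def by (auto simp: nth_append)
      ultimately show "?g (j + ?la) = f (lb False c j) (rb R c j)" by simp
    qed simp
    finally show ?thesis .
  qed
  finally show ?thesis .
qed

lemma wt_msplit:
  assumes "a \<noteq> []" "c \<noteq> []" "msplit (a @ c) (length a)"
  shows "wt f L R (a @ c) = wt f L False a * wt f True R c"
proof -
  let ?w = "a @ c" let ?la = "length a" let ?lc = "length c"
  let ?g = "\<lambda>i. f (lb L ?w i) (rb R ?w i)"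
  have P: "a!i > c!j" if "i < ?la" "j < ?lc" for i j
    using assms(3) that unfolding msplit_def by (metis add.commute le_add1 length_append nat_add_left_cancel_less nth_append nth_append_length_plus)
  have "wt f L R ?w = prod ?g {0..<?la} * prod ?g {?la..<?la + ?lc}"
    unfolding wt_def by (simp add: prod.atLeastLessThan_concat)
  also have "prod ?g {0..<?la} = wt f L False a"
    unfolding wt_def
  proof (rule prod.cong)
    fix i assume i: "i \<in> {0..<?la}"
    have "lb L ?w i = lb L a i" using i unfolding lb_def by (auto simp: nth_append)
    moreover have "rb R ?w i = rb False a i"
    proof (cases "Suc i = ?la")
      case True
      hence "?w ! Suc i = c!0" "?w!i = a!i" using i by (auto simp: nth_append)
      thus ?thesis using True assms(2) P[of i 0] i unfolding rb_def by auto
    next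
      case False thus ?thesis using i unfolding rb_def by (auto simp: nth_append)
    qed
    ultimately show "?g i = f (lb L a i) (rb False a i)" by simp
  qed simp
  also have "prod ?g {?la..<?la + ?lc} = wt f True R c"
  proof -
    have "prod ?g {?la..<?la + ?lc} = prod ?g {0 + ?la..<?lc + ?la}" by (simp add: add.commute)
    also have "\<dots> = (\<Prod>j = 0..<?lc. ?g (j + ?la))" by (rule prod.shift_bounds_nat_ivl)
    also have "\<dots> = wt f True R c" unfolding wt_def
    proof (rule prod.cong)
      fix j assume j: "j \<in> {0..<?lc}"
      have "lb L ?w (j + ?la) = lb True c j"
      proof (cases "j = 0")
        case True
        hence "?w ! (j + ?la - 1) = a!(?la - 1)" "?w!(j + ?la) = c!0" using assms(1) by (auto simp: nth_append)
        thus ?thesis using True assms P[of "?la - 1" 0] unfolding lb_def by auto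
      next
        case False thus ?thesis using j unfolding lb_def by (auto simp: nth_append)
      qed
      moreover have "rb R ?w (j + ?la) = rb R c j" using j unfolding rb_def by (auto simp: nth_append)
      ultimately show "?g (j + ?la) = f (lb True c j) (rb R c j)" by simp
    qed simp
    finally show ?thesis .
  qed
  finally show ?thesis .
qed

lemma wt_shift: "wt f L R (map (\<lambda>x. x + k) w) = wt f L R w"
  unfolding wt_def lb_def rb_def by (intro prod.cong) auto

lemma wt_dsum:
  assumes "a \<in> perms m" "b \<in> perms k" "0 < m" "0 < k"
  shows "wt f L R (dsum a b) = wt f L True a * wt f False R b"
proof -
  have la: "length a = m" "length b = k" using perms_length assms by auto
  have "wt f L R (dsum a b) = wt f L True a * wt f False R (map (\<lambda>x. x + length a) b)"
    unfolding dsum_def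
    by (rule wt_psplit) (use assms la dsum_psplit[OF assms(1,2)] in \<open>auto simp: dsum_def\<close>)
  thus ?thesis by (simp add: wt_shift)
qed

lemma wt_cpl:
  assumes w: "w \<in> perms n"
  shows "wt f L R (cpl n w) = wt (\<lambda>x y. f (\<not>x) (\<not>y)) (\<not>L) (\<not>R) w"
  unfolding wt_def
proof (rule prod.cong)
  fix i assume i: "i \<in> {0..<length w}"
  have d: "distinct w" using w by (simp add: perms_iff)
  have "lb L (cpl n w) i = (\<not> lb (\<not>L) w i)"
  proof (cases "i = 0")
    case False
    hence "w!(i-1) \<noteq> w!i" using d i by (simp add: nth_eq_iff_index_eq)
    thus ?thesis using False i cpl_nth_less[OF w, of i "i - 1"] unfolding lb_def by auto
  qed (simp add: lb_def)
  moreover have "rb R (cpl n w) i = (\<not> rb (\<not>R) w i)"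
  proof (cases "Suc i = length w")
    case False
    hence "w!(Suc i) \<noteq> w!i" using d i by (simp add: nth_eq_iff_index_eq)
    thus ?thesis using False i cpl_nth_less[OF w, of i "Suc i"] unfolding rb_def by auto
  qed (simp add: rb_def)
  ultimately show "f (lb L (cpl n w) i) (rb R (cpl n w) i) =
       (\<lambda>x y. f (\<not>x) (\<not>y)) (lb (\<not> L) w i) (rb (\<not> R) w i)" by simp
qed simp


abbreviation sep :: "nat \<Rightarrow> nat list set" where "sep n \<equiv> separable_perms n"

lemma sep_iff: "w \<in> sep n \<longleftrightarrow> w \<in> perms n \<and> sepl w"
  by (simp add: separable_perms_sepl)

lemma finite_sep: "finite (sep n)"
  by (rule finite_subset[OF _ finite_permutations_of_set[of "{1..n}"]]) (auto simp: sep_iff)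

definition Ssum :: "(bool \<Rightarrow> bool \<Rightarrow> int) \<Rightarrow> bool \<Rightarrow> bool \<Rightarrow> nat \<Rightarrow> int" where
  "Ssum f L R n = (\<Sum>w\<in>sep n. wt f L R w)"
definition Asum :: "(bool \<Rightarrow> bool \<Rightarrow> int) \<Rightarrow> bool \<Rightarrow> bool \<Rightarrow> nat \<Rightarrow> int" where
  "Asum f L R n = (\<Sum>w\<in>{w\<in>sep n. \<not> plusdec w}. wt f L R w)"
definition Bsum :: "(bool \<Rightarrow> bool \<Rightarrow> int) \<Rightarrow> bool \<Rightarrow> bool \<Rightarrow> nat \<Rightarrow> int" where
  "Bsum f L R n = (\<Sum>w\<in>{w\<in>sep n. \<not> minusdec w}. wt f L R w)"

definition Dom :: "nat \<Rightarrow> (nat \<times> nat list \<times> nat list) set" where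
  "Dom n = (SIGMA a:{1..<n}. {x\<in>sep a. \<not> plusdec x} \<times> sep (n - a))"

lemma psplit_take_sub:
  assumes "psplit w a" "a < a'" "a' \<le> length w"
  shows "psplit (take a' w) a"
  using assms unfolding psplit_def by auto

lemma dom_inj: "inj_on (\<lambda>(a, p). dsum (fst p) (snd p)) (Dom n)"
proof -
  have *: "a = a' \<and> x = x' \<and> y = y'" if d: "(a, x, y) \<in> Dom n" "(a', x', y') \<in> Dom n"
    and eq: "dsum x y = dsum x' y'" for a x y a' x' y'
  proof -
  have h: "x \<in> perms a" "y \<in> perms (n - a)" "\<not> plusdec x" "x' \<in> perms a'" "y' \<in> perms (n - a')" "\<not> plusdec x'"
    "0 < a" "a < n" "0 < a'" "a' < n"
    using d unfolding Dom_def by (auto simp: sep_iff)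
  have lx: "length x = a" "length x' = a'" "length y = n - a" "length y' = n - a'" using h perms_length by auto
  have ps: "psplit (dsum x y) a" "psplit (dsum x' y') a'" using dsum_psplit h by auto
  have tk: "take a (dsum x y) = x" "take a' (dsum x' y') = x'" using lx by (auto simp: dsum_def)
  have ld: "length (dsum x y) = n" using lx h by (simp add: dsum_def)
  have aa: "a = a'"
  proof (rule ccontr)
    assume "a \<noteq> a'"
    hence "a < a' \<or> a' < a" by linarith
    thus False
    proof
      assume "a < a'"
      hence "psplit x' a" using psplit_take_sub[OF ps(1), of a'] tk eq h ld by simp
      thus False using h \<open>a < a'\<close> lx unfolding plusdec_def by auto
    next
      assume "a' < a"
      hence "psplit x a'" using psplit_take_sub[OF ps(2), of a] tk eq h ld by simp
      thus False using h \<open>a' < a\<close> lx unfolding plusdec_def by auto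
    qed
  qed
  have xx: "x = x'"
  proof -
    have "x = take a (dsum x' y')" using tk(1) eq by simp
    also have "\<dots> = x'" using tk(2) aa by simp
    finally show ?thesis .
  qed
  have "map (\<lambda>z. z + a) y = map (\<lambda>z. z + a) y'" using eq xx lx aa unfolding dsum_def by simp
  hence "y = y'" by (simp add: inj_map_eq_map inj_on_def)
  thus "a = a' \<and> x = x' \<and> y = y'" using aa xx by simp
  qed
  show ?thesis unfolding inj_on_def
  proof (intro ballI impI)
    fix p q assume "p \<in> Dom n" "q \<in> Dom n"
      "(case p of (a, p) \<Rightarrow> dsum (fst p) (snd p)) = (case q of (a, p) \<Rightarrow> dsum (fst p) (snd p))"
    moreover obtain a x y where p: "p = (a, x, y)" by (cases p) auto
    moreover obtain a' x' y' where q: "q = (a', x', y')" by (cases q) auto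
    ultimately have "(a, x, y) \<in> Dom n" "(a', x', y') \<in> Dom n" "dsum x y = dsum x' y'" by simp_all
    from *[OF this] show "p = q" using p q by simp
  qed
qed

lemma dom_image:
  assumes "0 < n"
  shows "(\<lambda>(a, p). dsum (fst p) (snd p)) ` Dom n = {w\<in>sep n. plusdec w}"
proof
  show "(\<lambda>(a, p). dsum (fst p) (snd p)) ` Dom n \<subseteq> {w\<in>sep n. plusdec w}"
  proof (rule subsetI)
    fix v assume "v \<in> (\<lambda>(a, p). dsum (fst p) (snd p)) ` Dom n"
    then obtain a x y where d: "(a, x, y) \<in> Dom n" and v: "v = dsum x y" by auto
    have h: "x \<in> perms a" "y \<in> perms (n - a)" "sepl x" "sepl y" "0 < a" "a < n"
      using d unfolding Dom_def by (auto simp: sep_iff)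
    have "dsum x y \<in> perms n" using dsum_perms[OF h(1,2)] h by simp
    moreover have "sepl (dsum x y)" using sepl_dsum h by blast
    moreover have "plusdec (dsum x y)" unfolding plusdec_def
      using dsum_psplit[OF h(1,2)] h perms_length[OF \<open>dsum x y \<in> perms n\<close>] by blast
    ultimately show "v \<in> {w \<in> sep n. plusdec w}"
      using v by (simp add: sep_iff)
  qed
next
  show "{w\<in>sep n. plusdec w} \<subseteq> (\<lambda>(a, p). dsum (fst p) (snd p)) ` Dom n"
  proof (rule subsetI)
    fix w assume "w \<in> {w\<in>sep n. plusdec w}"
    hence w: "w \<in> sep n" "plusdec w" by auto
    have wp: "w \<in> perms n" "sepl w" using w sep_iff by auto
    have lw: "length w = n" using perms_length wp by auto
    define P where "P = (\<lambda>k. 0 < k \<and> k < length w \<and> psplit w k)"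
    define k where "k = (LEAST k. P k)"
    have "\<exists>k. P k" using w(2) unfolding plusdec_def P_def by blast
    hence Pk: "P k" unfolding k_def by (rule LeastI_ex)
    have mink: "\<not> P k'" if "k' < k" for k' using not_less_Least[OF that[unfolded k_def]] by simp
    have k: "0 < k" "k < n" "psplit w k" using Pk lw unfolding P_def by auto
    note dec = psplit_decomp[OF wp(1) k(3)] 
    define x where "x = take k w"
    define y where "y = map (\<lambda>z. z - k) (drop k w)"
    have x: "x \<in> perms k" and y: "y \<in> perms (n - k)" and wd: "dsum x y = w"
      using dec k unfolding x_def y_def by auto
    have sx: "sepl x" unfolding x_def using sepl_take wp by blast
    have sy: "sepl y" unfolding y_def using sepl_drop_shift wp dec k by auto
    have npx: "\<not> plusdec x"
    proof
      assume "plusdec x"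
      then obtain k' where k': "0 < k'" "k' < length x" "psplit x k'" unfolding plusdec_def by blast
      have lx: "length x = k" using x perms_length by auto
      have "psplit w k'" unfolding psplit_def
      proof (intro allI impI)
        fix i j assume ij: "i < k'" "k' \<le> j" "j < length w"
        show "w!i < w!j"
        proof (cases "j < k")
          case True
          thus ?thesis using k'(3) ij lx unfolding psplit_def x_def by auto
        next
          case False
          thus ?thesis using k(3) ij k' lx unfolding psplit_def by auto
        qed
      qed
      hence "P k'" unfolding P_def using k' lx k lw by auto
      thus False using mink k' lx by auto
    qed
    have "(k, x, y) \<in> Dom n" unfolding Dom_def using k x y sx sy npx by (auto simp: sep_iff)
    thus "w \<in> (\<lambda>(a, p). dsum (fst p) (snd p)) ` Dom n"
      by (rule rev_image_eqI) (simp add: wd)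
  qed
qed

lemma eqI:
  assumes "0 < n"
  shows "Ssum f L R n = Asum f L R n + (\<Sum>a = 1..<n. Asum f L True a * Ssum f False R (n - a))"
proof -
  let ?A = "{w\<in>sep n. \<not> plusdec w}" let ?P = "{w\<in>sep n. plusdec w}"
  have "Ssum f L R n = sum (wt f L R) (?A \<union> ?P)" unfolding Ssum_def
    by (rule sum.cong) auto
  also have "\<dots> = sum (wt f L R) ?A + sum (wt f L R) ?P"
    by (rule sum.union_disjoint) (use finite_sep in auto)
  also have "sum (wt f L R) ?P = (\<Sum>(a, p)\<in>Dom n. wt f L R (dsum (fst p) (snd p)))"
  proof -
    have "bij_betw (\<lambda>(a, p). dsum (fst p) (snd p)) (Dom n) ?P"
      unfolding bij_betw_def using dom_inj dom_image[OF assms] by blast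
    from sum.reindex_bij_betw[OF this, of "wt f L R", symmetric] show ?thesis
      by (simp add: case_prod_beta)
  qed
  also have "\<dots> = (\<Sum>a = 1..<n. \<Sum>p\<in>{x\<in>sep a. \<not> plusdec x} \<times> sep (n - a). wt f L R (dsum (fst p) (snd p)))"
    unfolding Dom_def by (rule sum.Sigma[symmetric]) (use finite_sep in auto)
  also have "\<dots> = (\<Sum>a = 1..<n. Asum f L True a * Ssum f False R (n - a))"
  proof (rule sum.cong)
    fix a assume a: "a \<in> {1..<n}"
    have "(\<Sum>p\<in>{x\<in>sep a. \<not> plusdec x} \<times> sep (n - a). wt f L R (dsum (fst p) (snd p)))
        = (\<Sum>x\<in>{x\<in>sep a. \<not> plusdec x}. \<Sum>y\<in>sep (n - a). wt f L R (dsum x y))"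
      by (simp add: sum.cartesian_product case_prod_beta)
    also have "\<dots> = (\<Sum>x\<in>{x\<in>sep a. \<not> plusdec x}. \<Sum>y\<in>sep (n - a). wt f L True x * wt f False R y)"
    proof (intro sum.cong refl)
      fix x y assume "x \<in> {x\<in>sep a. \<not> plusdec x}" "y \<in> sep (n - a)"
      thus "wt f L R (dsum x y) = wt f L True x * wt f False R y"
        using wt_dsum a by (auto simp: sep_iff)
    qed
    also have "\<dots> = Asum f L True a * Ssum f False R (n - a)"
      unfolding Asum_def Ssum_def by (simp add: sum_product)
    finally show "(\<Sum>p\<in>{x\<in>sep a. \<not> plusdec x} \<times> sep (n - a). wt f L R (dsum (fst p) (snd p)))
        = Asum f L True a * Ssum f False R (n - a)" .
  qed simp
  finally show ?thesis unfolding Asum_def by simp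
qed

lemma sep_1: "sep (Suc 0) = {[Suc 0]}"
proof -
  have "perms (Suc 0) = {[Suc 0]}" using permutations_of_set_singleton[of "Suc 0"] by simp
  moreover have "sepl [Suc 0]" unfolding sepl_def c2413_def c3142_def by auto
  ultimately show ?thesis by (auto simp: sep_iff)
qed

lemma eqIII:
  assumes "0 < n"
  shows "Asum f L R n + Bsum f L R n = Ssum f L R n + (if n = 1 then f L R else 0)"
proof (cases "n = 1")
  case True
  have "\<not> plusdec [Suc 0]" "\<not> minusdec [Suc 0]" unfolding plusdec_def minusdec_def by auto
  moreover have "wt f L R [Suc 0] = f L R" unfolding wt_def lb_def rb_def by simp
  moreover have "{w\<in>sep (Suc 0). \<not> plusdec w} = {[Suc 0]}" "{w\<in>sep (Suc 0). \<not> minusdec w} = {[Suc 0]}"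
    using calculation by (auto simp: sep_1)
  ultimately show ?thesis using True unfolding Asum_def Bsum_def Ssum_def by (simp add: sep_1)
next
  case False
  have cov: "\<And>w. w \<in> sep n \<Longrightarrow> plusdec w \<or> minusdec w"
  proof -
    fix w assume "w \<in> sep n"
    hence "distinct w" "sepl w" "length w = n" using sep_iff perms_length by (auto simp: perms_iff)
    thus "plusdec w \<or> minusdec w" using decomp False assms by auto
  qed
  let ?A = "{w\<in>sep n. \<not> plusdec w}" let ?B = "{w\<in>sep n. \<not> minusdec w}"
  have "?A \<union> ?B = sep n" using not_plus_and_minus by blast
  moreover have "?A \<inter> ?B = {}" using cov by blast
  ultimately have "sum (wt f L R) ?A + sum (wt f L R) ?B = sum (wt f L R) (sep n)"
    using sum.union_disjoint[of ?A ?B "wt f L R"] finite_sep by auto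
  thus ?thesis using False unfolding Asum_def Bsum_def Ssum_def by simp
qed

definition negf :: "(bool \<Rightarrow> bool \<Rightarrow> int) \<Rightarrow> bool \<Rightarrow> bool \<Rightarrow> int" where
  "negf f = (\<lambda>x y. f (\<not>x) (\<not>y))"

lemma cpl_bij:
  assumes "\<And>w. w \<in> perms n \<Longrightarrow> (Q (cpl n w) \<longleftrightarrow> P w)"
  shows "bij_betw (cpl n) {w\<in>sep n. P w} {w\<in>sep n. Q w}"
proof (rule bij_betw_byWitness[where f'="cpl n"])
  show "\<forall>a\<in>{w \<in> sep n. P w}. cpl n (cpl n a) = a" using cpl_comp sep_iff by auto
  show "\<forall>a\<in>{w \<in> sep n. Q w}. cpl n (cpl n a) = a" using cpl_comp sep_iff by auto
  show "cpl n ` {w \<in> sep n. P w} \<subseteq> {w \<in> sep n. Q w}"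
    using assms cpl_perms sepl_cpl by (auto simp: sep_iff)
  show "cpl n ` {w \<in> sep n. Q w} \<subseteq> {w \<in> sep n. P w}"
  proof (rule subsetI)
    fix v assume "v \<in> cpl n ` {w \<in> sep n. Q w}"
    then obtain w where "w \<in> sep n" "Q w" and v: "v = cpl n w" by auto
    moreover hence "w \<in> perms n" using sep_iff by auto
    moreover hence "Q (cpl n (cpl n w))" using cpl_comp \<open>Q w\<close> by simp
    ultimately show "v \<in> {w \<in> sep n. P w}"
      using assms[of "cpl n w"] cpl_perms sepl_cpl v by (auto simp: sep_iff)
  qed
qed

lemma Ssum_neg: "Ssum f L R n = Ssum (negf f) (\<not>L) (\<not>R) n"
proof -
  have b: "bij_betw (cpl n) {w\<in>sep n. True} {w\<in>sep n. True}" by (rule cpl_bij) simp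
  have "Ssum (negf f) (\<not>L) (\<not>R) n = (\<Sum>w\<in>{w\<in>sep n. True}. wt f L R (cpl n w))"
    unfolding Ssum_def negf_def by (intro sum.cong) (auto simp: wt_cpl sep_iff)
  also have "\<dots> = (\<Sum>w\<in>{w\<in>sep n. True}. wt f L R w)" by (rule sum.reindex_bij_betw[OF b])
  finally show ?thesis unfolding Ssum_def by simp
qed

lemma Bsum_neg: "Bsum f L R n = Asum (negf f) (\<not>L) (\<not>R) n"
proof -
  have b: "bij_betw (cpl n) {w\<in>sep n. \<not> plusdec w} {w\<in>sep n. \<not> minusdec w}"
  proof (rule cpl_bij)
    fix w assume w: "w \<in> perms n"
    have "plusdec (cpl n (cpl n w)) \<longleftrightarrow> minusdec (cpl n w)" using plusdec_cpl cpl_perms w by blast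
    thus "(\<not> minusdec (cpl n w)) = (\<not> plusdec w)" using cpl_comp w by simp
  qed
  have "Asum (negf f) (\<not>L) (\<not>R) n = (\<Sum>w\<in>{w\<in>sep n. \<not> plusdec w}. wt f L R (cpl n w))"
    unfolding Asum_def negf_def by (intro sum.cong) (auto simp: wt_cpl sep_iff)
  also have "\<dots> = (\<Sum>w\<in>{w\<in>sep n. \<not> minusdec w}. wt f L R w)" by (rule sum.reindex_bij_betw[OF b])
  finally show ?thesis unfolding Bsum_def by simp
qed

lemma eqII:
  assumes "0 < n"
  shows "Ssum f L R n = Bsum f L R n + (\<Sum>a = 1..<n. Bsum f L False a * Ssum f True R (n - a))"
  using eqI[OF assms, of "negf f" "\<not>L" "\<not>R"] unfolding Ssum_neg[of f] Bsum_neg[of f]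
  by simp


lemma fps_nonzero_const: "(x::int fps) $ 0 = 1 \<Longrightarrow> x \<noteq> 0"
  by auto

lemma cubic_from_system:
  fixes s r q w aTT aTF aFT aFF bTT bTF bFT bFF z t u v :: "int fps"
  assumes I1: "s = aTT + aTT*q"
    and I2: "q = aFT + aFT*q"
    and I3: "r = aTF + aTT*w"
    and I4: "w = aFF + aFT*w"
    and II1: "s = bTT + bTF*s"
    and II2: "r = bTF + bTF*r"
    and II3: "q = bFT + bFF*s"
    and II4: "w = bFF + bFF*r"
    and III1: "aTT + bTT = s + z"
    and III2: "aTF + bTF = r + z*v"
    and III3: "aFT + bFT = q + z*u"
    and III4: "aFF + bFF = w + z*t"
    and q0: "q $ 0 = 0" and r0: "r $ 0 = 0"
  shows "s = z + z*(u+v)*s + z*t*s^2 + t*s^3"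
proof -
  define P where "P = 1 + q"
  define Q where "Q = 1 + r"
  have AP: "aTT * P = s" using I1 unfolding P_def by (simp add: algebra_simps)
  have AP2: "aFT * P = q" using I2 unfolding P_def by (simp add: algebra_simps)
  have BQ: "bTF * Q = r" using II2 unfolding Q_def by (simp add: algebra_simps)
  have BQ2: "bFF * Q = w" using II4 unfolding Q_def by (simp add: algebra_simps)
  have E1: "aTT = z + bTF * s" using III1 II1 by algebra
  have E2: "bFF = z*t + aFT * w" using III4 I4 by algebra
  have E3: "bTF = z*v + aTT * w" using III2 I3 by algebra
  have E4: "aFT = z*u + bFF * s" using III3 II3 by algebra
  have E1': "s*Q = z*P*Q + r*s*P"
  proof -
    have "aTT*P*Q = z*P*Q + (bTF*Q)*s*P" using E1 by (simp add: algebra_simps)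
    thus ?thesis using AP BQ by simp
  qed
  have E2': "w*P = z*t*P*Q + q*w*Q"
  proof -
    have "bFF*Q*P = z*t*P*Q + (aFT*P)*w*Q" using E2 by (simp add: algebra_simps)
    thus ?thesis using AP2 BQ2 by (simp add: algebra_simps)
  qed
  have E3': "r*P = z*v*P*Q + s*w*Q"
  proof -
    have "bTF*Q*P = z*v*P*Q + (aTT*P)*w*Q" using E3 by (simp add: algebra_simps)
    thus ?thesis using AP BQ by (simp add: algebra_simps)
  qed
  have E4': "q*Q = z*u*P*Q + w*s*P"
  proof -
    show ?thesis using E4 AP2 BQ2 by algebra
  qed
  define D where "D = P + Q - P*Q"
  have D0: "D \<noteq> 0"
  proof -
    have "D $ 0 = 1" unfolding D_def P_def Q_def using q0 r0 by simp
    thus ?thesis by auto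
  qed
  have sD: "s*D = z*P*Q"
  proof -
    show ?thesis using E1' unfolding D_def Q_def by algebra
  qed
  have wD: "w*D = z*t*P*Q"
  proof -
    show ?thesis using E2' unfolding D_def P_def by algebra
  qed
  have "w*D = (t*s)*D" using sD wD by (simp add: algebra_simps)
  hence wts: "w = t*s" using D0 by simp
  define K where "K = P*Q"
  define H where "H = P + Q"
  have K0: "K \<noteq> 0"
  proof -
    have "K $ 0 = 1" unfolding K_def P_def Q_def using q0 r0 by simp
    thus ?thesis by auto
  qed
  have sHK: "s*H = z*K + s*K" using sD unfolding D_def H_def K_def by algebra
  have HK: "2*K - H = z*(u+v)*K + t*s^2*H"
  proof -
    show ?thesis using E3' E4' unfolding K_def H_def wts P_def Q_def by algebra
  qed
  have "K * s = K * (z + z*(u+v)*s + z*t*s^2 + t*s^3)" using HK sHK by algebra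
  thus ?thesis using K0 by simp
qed

lemma cubic_unique:
  fixes s1 s2 z c t :: "int fps"
  assumes "s1 = z + z*c*s1 + z*t*s1^2 + t*s1^3" "s2 = z + z*c*s2 + z*t*s2^2 + t*s2^3"
    "s1 $ 0 = 0" "s2 $ 0 = 0" "z $ 0 = 0"
  shows "s1 = s2"
proof -
  define d where "d = s1 - s2"
  define g where "g = z*c + z*t*(s1 + s2) + t*(s1^2 + s1*s2 + s2^2)"
  have "d = d * g" unfolding d_def g_def
    using assms(1,2) by algebra
  hence "d * (1 - g) = 0" by (simp add: algebra_simps)
  moreover have "(1 - g) $ 0 = 1" unfolding g_def using assms(3-5) by (simp add: power2_eq_square)
  hence "1 - g \<noteq> 0" by auto
  ultimately have "d = 0" by simp
  thus ?thesis unfolding d_def by simp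
qed


definition fS :: "(bool \<Rightarrow> bool \<Rightarrow> int) \<Rightarrow> bool \<Rightarrow> bool \<Rightarrow> int fps" where
  "fS f L R = Abs_fps (\<lambda>n. if n = 0 then 0 else Ssum f L R n)"
definition fA :: "(bool \<Rightarrow> bool \<Rightarrow> int) \<Rightarrow> bool \<Rightarrow> bool \<Rightarrow> int fps" where
  "fA f L R = Abs_fps (\<lambda>n. if n = 0 then 0 else Asum f L R n)"
definition fB :: "(bool \<Rightarrow> bool \<Rightarrow> int) \<Rightarrow> bool \<Rightarrow> bool \<Rightarrow> int fps" where
  "fB f L R = Abs_fps (\<lambda>n. if n = 0 then 0 else Bsum f L R n)"

lemma conv_nth:
  fixes a b :: "int fps"
  assumes "a $ 0 = 0" "b $ 0 = 0"
  shows "(a * b) $ n = (\<Sum>i = 1..<n. a $ i * b $ (n - i))"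
proof (cases "n = 0")
  case True thus ?thesis using assms by simp
next
  case False
  have s: "{0..n} = {0, n} \<union> {1..<n}" using False by auto
  have "(a * b) $ n = (\<Sum>i\<in>{0, n} \<union> {1..<n}. a $ i * b $ (n - i))" unfolding fps_mult_nth s ..
  also have "\<dots> = (\<Sum>i\<in>{0, n}. a $ i * b $ (n - i)) + (\<Sum>i = 1..<n. a $ i * b $ (n - i))"
    by (rule sum.union_disjoint) auto
  also have "(\<Sum>i\<in>{0, n}. a $ i * b $ (n - i)) = 0" using assms False by simp
  finally show ?thesis by simp
qed

lemma FI: "fS f L R = fA f L R + fA f L True * fS f False R"
proof (rule fps_ext)
  fix n
  show "fS f L R $ n = (fA f L R + fA f L True * fS f False R) $ n"
  proof (cases "n = 0")
    case True thus ?thesis by (simp add: fS_def fA_def)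
  next
    case False
    have "(fA f L True * fS f False R) $ n = (\<Sum>i = 1..<n. Asum f L True i * Ssum f False R (n - i))"
      by (subst conv_nth) (auto simp: fS_def fA_def intro!: sum.cong)
    thus ?thesis using eqI[of n f L R] False by (simp add: fS_def fA_def)
  qed
qed

lemma FII: "fS f L R = fB f L R + fB f L False * fS f True R"
proof (rule fps_ext)
  fix n
  show "fS f L R $ n = (fB f L R + fB f L False * fS f True R) $ n"
  proof (cases "n = 0")
    case True thus ?thesis by (simp add: fS_def fB_def)
  next
    case False
    have "(fB f L False * fS f True R) $ n = (\<Sum>i = 1..<n. Bsum f L False i * Ssum f True R (n - i))"
      by (subst conv_nth) (auto simp: fS_def fB_def intro!: sum.cong)
    thus ?thesis using eqII[of n f L R] False by (simp add: fS_def fB_def)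
  qed
qed

lemma FIII: "fA f L R + fB f L R = fS f L R + fps_X * fps_const (f L R)"
proof (rule fps_ext)
  fix n
  show "(fA f L R + fB f L R) $ n = (fS f L R + fps_X * fps_const (f L R)) $ n"
  proof (cases "n = 0")
    case True thus ?thesis by (simp add: fS_def fA_def fB_def)
  next
    case False
    thus ?thesis using eqIII[of n f L R] by (auto simp: fS_def fA_def fB_def)
  qed
qed

definition fw :: "int \<Rightarrow> int \<Rightarrow> int \<Rightarrow> bool \<Rightarrow> bool \<Rightarrow> int" where
  "fw t u v = (\<lambda>a b. if a then (if b then 1 else v) else (if b then u else t))"

lemma cubic_fw:
  "fS (fw t u v) True True = fps_X + fps_X * (fps_const (u + v)) * fS (fw t u v) True True
     + fps_X * fps_const t * (fS (fw t u v) True True)^2 + fps_const t * (fS (fw t u v) True True)^3"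
proof -
  let ?f = "fw t u v"
  have "fS ?f True True = fps_X + fps_X*(fps_const u + fps_const v)*fS ?f True True
     + fps_X*fps_const t*(fS ?f True True)^2 + fps_const t*(fS ?f True True)^3"
  proof (rule cubic_from_system[where aTT="fA ?f True True" and aTF="fA ?f True False"
        and aFT="fA ?f False True" and aFF="fA ?f False False"
        and bTT="fB ?f True True" and bTF="fB ?f True False"
        and bFT="fB ?f False True" and bFF="fB ?f False False"
        and r="fS ?f True False" and q="fS ?f False True" and w="fS ?f False False"])
    show "fS ?f True True = fA ?f True True + fA ?f True True * fS ?f False True" using FI .
    show "fS ?f False True = fA ?f False True + fA ?f False True * fS ?f False True" using FI .
    show "fS ?f True False = fA ?f True False + fA ?f True True * fS ?f False False" using FI .
    show "fS ?f False False = fA ?f False False + fA ?f False True * fS ?f False False" using FI .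
    show "fS ?f True True = fB ?f True True + fB ?f True False * fS ?f True True" using FII .
    show "fS ?f True False = fB ?f True False + fB ?f True False * fS ?f True False" using FII .
    show "fS ?f False True = fB ?f False True + fB ?f False False * fS ?f True True" using FII .
    show "fS ?f False False = fB ?f False False + fB ?f False False * fS ?f True False" using FII .
    show "fA ?f True True + fB ?f True True = fS ?f True True + fps_X"
      using FIII[of ?f True True] by (simp add: fw_def)
    show "fA ?f True False + fB ?f True False = fS ?f True False + fps_X * fps_const v"
      using FIII[of ?f True False] by (simp add: fw_def)
    show "fA ?f False True + fB ?f False True = fS ?f False True + fps_X * fps_const u"
      using FIII[of ?f False True] by (simp add: fw_def)
    show "fA ?f False False + fB ?f False False = fS ?f False False + fps_X * fps_const t"
      using FIII[of ?f False False] by (simp add: fw_def)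
    show "fS ?f False True $ 0 = 0" "fS ?f True False $ 0 = 0" by (simp_all add: fS_def)
  qed
  thus ?thesis by (simp add: fps_const_add)
qed

lemma Ssum_uv:
  assumes "0 < n"
  shows "Ssum (fw t u v) True True n = Ssum (fw t (u + v) 0) True True n"
proof -
  have "fS (fw t u v) True True = fS (fw t (u + v) 0) True True"
    by (rule cubic_unique[OF cubic_fw cubic_fw[of t "u + v" 0, simplified]]) (simp_all add: fS_def)
  hence "fS (fw t u v) True True $ n = fS (fw t (u + v) 0) True True $ n" by simp
  thus ?thesis using assms by (simp add: fS_def)
qed


lemma coeff_X1_pow: "coeff ([:1, 1:] ^ N) j = (of_nat (N choose j) :: int)"
proof (cases "j \<le> N")
  case True thus ?thesis using coeff_linear_poly_power[OF True, of "1::int" 1] by simp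
next
  case False
  have "degree ([:1::int, 1:] ^ N) = N" using degree_linear_power[of "1::int" N] by simp
  hence "coeff ([:1::int, 1:] ^ N) j = 0" using False by (intro coeff_eq_0) simp
  thus ?thesis using False by simp
qed

definition ct :: "nat \<Rightarrow> nat \<Rightarrow> nat \<Rightarrow> int" where
  "ct m k i = (if k \<le> i then of_nat ((m - 2*k) choose (i - k)) else 0)"

lemma coeff_term: "coeff (monom 1 k * [:1, 1:] ^ (m - 2*k)) i = ct m k i"
  unfolding ct_def by (simp add: coeff_monom_mult coeff_X1_pow)

lemma coeff_gsum:
  "coeff (\<Sum>k\<in>{0..m div 2}. smult (g k) (monom 1 k * [:1, 1:] ^ (m - 2 * k))) i
    = (\<Sum>k\<in>{0..m div 2}. g k * ct m k i)"
  by (simp add: coeff_sum coeff_term)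

lemma ct_sym:
  assumes "k \<le> m div 2" "i \<le> m"
  shows "ct m k i = ct m k (m - i)"
proof -
  consider "k \<le> i \<and> k \<le> m - i" | "i < k" | "m - i < k" by linarith
  thus ?thesis
  proof cases
    case 1
    hence "i - k \<le> m - 2*k" using assms by linarith
    hence "(m - 2*k) choose (i - k) = (m - 2*k) choose ((m - 2*k) - (i - k))" by (rule binomial_symmetric)
    moreover have "(m - 2*k) - (i - k) = m - i - k" using 1 assms by linarith
    ultimately show ?thesis using 1 unfolding ct_def by simp
  next
    case 2
    hence "k \<le> m - i" "m - 2*k < m - i - k" using assms by linarith+
    thus ?thesis using 2 unfolding ct_def by (simp add: binomial_eq_0)
  next
    case 3
    hence "k \<le> i" "m - 2*k < i - k" using assms by linarith+
    thus ?thesis using 3 unfolding ct_def by (simp add: binomial_eq_0)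
  qed
qed

lemma ct_inc:
  assumes "k \<le> m div 2" "i < m div 2"
  shows "ct m k i \<le> ct m k (Suc i)"
proof -
  consider "Suc i < k" | "Suc i = k" | "k \<le> i" by linarith
  thus ?thesis
  proof cases
    case 3
    have "(m - 2*k) choose (i - k) \<le> (m - 2*k) choose (Suc i - k)"
      by (rule binomial_mono) (use assms 3 in linarith)+
    thus ?thesis using 3 unfolding ct_def by simp
  qed (auto simp: ct_def)
qed

lemma ct_dec:
  assumes "k \<le> m div 2" "m div 2 \<le> i"
  shows "ct m k (Suc i) \<le> ct m k i"
proof -
  have ki: "k \<le> i" using assms by linarith
  show ?thesis
  proof (cases "Suc i - k \<le> m - 2*k")
    case True
    have "(m - 2*k) choose (Suc i - k) \<le> (m - 2*k) choose (i - k)"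
      by (rule binomial_antimono) (use assms ki True in linarith)+
    thus ?thesis using ki unfolding ct_def by simp
  next
    case False thus ?thesis using ki unfolding ct_def by (simp add: binomial_eq_0)
  qed
qed

lemma gamma_props:
  fixes g :: "nat \<Rightarrow> int"
  assumes g: "\<And>k. g k \<ge> 0"
    and p: "p = (\<Sum>k\<in>{0..m div 2}. smult (g k) (monom 1 k * [:1, 1:] ^ (m - 2 * k)))"
  shows "palindromic p m" "unimodal p"
proof -
  have cp: "coeff p i = (\<Sum>k\<in>{0..m div 2}. g k * ct m k i)" for i unfolding p by (rule coeff_gsum)
  have "degree p \<le> m"
    unfolding p
  proof (rule degree_sum_le)
    fix k assume k: "k \<in> {0..m div 2}"
    have "degree (smult (g k) (monom 1 k * [:1, 1:] ^ (m - 2 * k))) \<le> degree (monom (1::int) k * [:1, 1:] ^ (m - 2 * k))"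
      by (rule degree_smult_le)
    also have "\<dots> \<le> degree (monom (1::int) k) + degree ([:1::int, 1:] ^ (m - 2 * k))" by (rule degree_mult_le)
    also have "\<dots> \<le> k + (m - 2*k)" using degree_linear_power[of "1::int" "m - 2*k"]
      by (simp add: degree_monom_eq)
    also have "\<dots> \<le> m" using k by auto
    finally show "degree (smult (g k) (monom 1 k * [:1, 1:] ^ (m - 2 * k))) \<le> m" .
  qed simp
  moreover have "\<forall>i\<le>m. coeff p i = coeff p (m - i)"
  proof (intro allI impI)
    fix i assume i: "i \<le> m"
    show "coeff p i = coeff p (m - i)" unfolding cp
    proof (rule sum.cong[OF refl])
      fix k assume "k \<in> {0..m div 2}"
      thus "g k * ct m k i = g k * ct m k (m - i)" using ct_sym[of k m i] i by simp
    qed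
  qed
  ultimately show "palindromic p m" unfolding palindromic_def by blast
  have inc: "coeff p i \<le> coeff p (i + 1)" if "i < m div 2" for i
    unfolding cp
  proof (rule sum_mono)
    fix k assume "k \<in> {0..m div 2}"
    hence "ct m k i \<le> ct m k (Suc i)" using ct_inc[OF _ that] by simp
    thus "g k * ct m k i \<le> g k * ct m k (i + 1)" using mult_left_mono g[of k] by simp
  qed
  have dec: "coeff p (i + 1) \<le> coeff p i" if "m div 2 \<le> i" for i
    unfolding cp
  proof (rule sum_mono)
    fix k assume "k \<in> {0..m div 2}"
    hence "ct m k (Suc i) \<le> ct m k i" using ct_dec[OF _ that] by simp
    thus "g k * ct m k (i + 1) \<le> g k * ct m k i" using mult_left_mono g[of k] by simp
  qed
  define c where "c = min (m div 2) (degree p)"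
  show "unimodal p" unfolding unimodal_def
  proof (rule exI[of _ c], intro conjI allI impI)
    show "c \<le> degree p" unfolding c_def by simp
    fix i
    show "i < c \<Longrightarrow> coeff p i \<le> coeff p (i + 1)" using inc unfolding c_def by simp
    show "c \<le> i \<and> i < degree p \<Longrightarrow> coeff p (i + 1) \<le> coeff p i"
    proof -
      assume "c \<le> i \<and> i < degree p"
      hence "m div 2 \<le> i" unfolding c_def by linarith
      thus ?thesis by (rule dec)
    qed
  qed
qed


lemma card_shift1: "card {x\<in>{1..n}. P x} = card {i\<in>{0..<n}. P (Suc i)}"
proof -
  have "{x\<in>{1..n}. P x} = Suc ` {i\<in>{0..<n}. P (Suc i)}"
  proof (rule set_eqI)
    fix x show "x \<in> {x\<in>{1..n}. P x} \<longleftrightarrow> x \<in> Suc ` {i\<in>{0..<n}. P (Suc i)}"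
      by (cases x) auto
  qed
  thus ?thesis by (simp add: card_image)
qed

lemma prod_if_const:
  assumes "finite A"
  shows "(\<Prod>i\<in>A. if P i then c else 1) = (c::int) ^ card {i\<in>A. P i}"
proof -
  have "(\<Prod>i\<in>A. if P i then c else 1) = prod (\<lambda>_. c) (A \<inter> {x. P x}) * prod (\<lambda>_. 1) (A \<inter> - {x. P x})"
    by (rule prod.If_cases[OF assms])
  also have "A \<inter> {x. P x} = {i\<in>A. P i}" by auto
  finally show ?thesis by simp
qed

lemma pval_in: "1 \<le> i \<Longrightarrow> i \<le> length w \<Longrightarrow> pval w i = enat (w ! (i - 1))"
  by (simp add: pval_def)
lemma pval_0: "pval w 0 = \<infinity>" by (simp add: pval_def)
lemma pval_out: "length w < i \<Longrightarrow> pval w i = \<infinity>" by (simp add: pval_def)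

lemma des_rb:
  assumes d: "distinct w"
  shows "des w = card {i\<in>{0..<length w}. \<not> rb True w i}"
proof -
  have "des w = card {i\<in>{0..<length w}. pval w (Suc i) > pval w (Suc i + 1)}"
    unfolding des_def by (rule card_shift1)
  also have "{i\<in>{0..<length w}. pval w (Suc i) > pval w (Suc i + 1)} = {i\<in>{0..<length w}. \<not> rb True w i}"
  proof (rule Collect_cong, rule conj_cong[OF refl])
    fix i assume i: "i \<in> {0..<length w}"
    show "(pval w (Suc i) > pval w (Suc i + 1)) = (\<not> rb True w i)"
    proof (cases "Suc i = length w")
      case True thus ?thesis using i by (simp add: pval_def rb_def)
    next
      case False
      hence "w ! Suc i \<noteq> w ! i" using d i by (simp add: nth_eq_iff_index_eq)
      thus ?thesis using False i by (auto simp: pval_def rb_def)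
    qed
  qed
  finally show ?thesis .
qed

lemma dd_lb_rb:
  assumes d: "distinct w"
  shows "dd w = card {i\<in>{0..<length w}. lb True w i \<and> \<not> rb True w i}"
proof -
  have "dd w = card {i\<in>{0..<length w}. pval w (Suc i - 1) > pval w (Suc i) \<and> pval w (Suc i) > pval w (Suc i + 1)}"
    unfolding dd_def by (rule card_shift1)
  also have "{i\<in>{0..<length w}. pval w (Suc i - 1) > pval w (Suc i) \<and> pval w (Suc i) > pval w (Suc i + 1)}
     = {i\<in>{0..<length w}. lb True w i \<and> \<not> rb True w i}"
  proof (rule Collect_cong, rule conj_cong[OF refl])
    fix i assume i: "i \<in> {0..<length w}"
    have A: "(pval w (Suc i - 1) > pval w (Suc i)) = lb True w i"
    proof (cases "i = 0")
      case True thus ?thesis using i by (simp add: pval_def lb_def Suc_le_eq)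
    next
      case False
      hence "w ! (i - 1) \<noteq> w ! i" using d i by (simp add: nth_eq_iff_index_eq)
      thus ?thesis using False i by (auto simp: pval_def lb_def)
    qed
    have B: "(pval w (Suc i) > pval w (Suc i + 1)) = (\<not> rb True w i)"
    proof (cases "Suc i = length w")
      case True thus ?thesis using i by (simp add: pval_def rb_def)
    next
      case False
      hence "w ! Suc i \<noteq> w ! i" using d i by (simp add: nth_eq_iff_index_eq)
      thus ?thesis using False i by (auto simp: pval_def rb_def)
    qed
    show "(pval w (Suc i - 1) > pval w (Suc i) \<and> pval w (Suc i) > pval w (Suc i + 1))
        = (lb True w i \<and> \<not> rb True w i)" using A B by simp
  qed
  finally show ?thesis .
qed

lemma card_lb:
  assumes d: "distinct w" and ne: "w \<noteq> []"
  shows "card {i\<in>{0..<length w}. lb True w i} = Suc (card {i\<in>{0..<length w}. \<not> rb True w i})"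
proof -
  let ?N = "{i\<in>{0..<length w}. \<not> rb True w i}"
  have "{i\<in>{0..<length w}. lb True w i} = insert 0 (Suc ` ?N)"
  proof (rule set_eqI)
    fix j
    show "j \<in> {i\<in>{0..<length w}. lb True w i} \<longleftrightarrow> j \<in> insert 0 (Suc ` ?N)"
    proof (cases j)
      case 0 thus ?thesis using ne by (simp add: lb_def)
    next
      case (Suc i)
      show ?thesis
      proof (cases "Suc i < length w")
        case True
        hence "w ! Suc i \<noteq> w ! i" using d by (simp add: nth_eq_iff_index_eq)
        thus ?thesis using Suc True by (auto simp: lb_def rb_def)
      next
        case False thus ?thesis using Suc by (auto simp: rb_def)
      qed
    qed
  qed
  moreover have "0 \<notin> Suc ` ?N" by auto
  ultimately show ?thesis by (simp add: card_image)
qed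

lemma wt_des:
  assumes d: "distinct w"
  shows "wt (fw t 1 t) True True w = t ^ des w"
proof -
  have "wt (fw t 1 t) True True w = (\<Prod>i = 0..<length w. if \<not> rb True w i then t else 1)"
    unfolding wt_def by (intro prod.cong) (auto simp: fw_def)
  also have "\<dots> = t ^ des w" by (simp add: prod_if_const des_rb[OF d])
  finally show ?thesis .
qed

lemma wt_dd:
  assumes d: "distinct w" and ne: "w \<noteq> []"
  shows "wt (fw t (1 + t) 0) True True w =
     (if dd w = 0 then t ^ des w * (1 + t) ^ (length w - 1 - 2 * des w) else 0)"
    and "dd w = 0 \<Longrightarrow> 2 * des w + 1 \<le> length w"
proof -
  let ?n = "length w"
  let ?N = "{i\<in>{0..<?n}. \<not> rb True w i}"
  let ?LB = "{i\<in>{0..<?n}. lb True w i}"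
  let ?M = "{i\<in>{0..<?n}. rb True w i \<and> \<not> lb True w i}"
  have cN: "card ?N = des w" using des_rb[OF d] by simp
  have cLB: "card ?LB = Suc (des w)" using card_lb[OF d ne] cN by simp
  show "wt (fw t (1 + t) 0) True True w =
     (if dd w = 0 then t ^ des w * (1 + t) ^ (length w - 1 - 2 * des w) else 0)"
  proof (cases "dd w = 0")
    case False
    hence "{i\<in>{0..<?n}. lb True w i \<and> \<not> rb True w i} \<noteq> {}" using dd_lb_rb[OF d] by (metis card.empty)
    then obtain i where i: "i < ?n" "lb True w i" "\<not> rb True w i" by auto
    have "wt (fw t (1 + t) 0) True True w = 0" unfolding wt_def
      using i by (intro prod_zero) (auto simp: fw_def intro!: bexI[of _ i])
    thus ?thesis using False by simp
  next
    case True
    hence nodd: "\<And>i. i < ?n \<Longrightarrow> lb True w i \<Longrightarrow> rb True w i"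
      using dd_lb_rb[OF d] by auto
    have "wt (fw t (1 + t) 0) True True w
        = (\<Prod>i = 0..<?n. (if \<not> rb True w i then t else 1) * (if rb True w i \<and> \<not> lb True w i then 1 + t else 1))"
      unfolding wt_def by (intro prod.cong) (auto simp: fw_def dest: nodd)
    also have "\<dots> = t ^ card ?N * (1 + t) ^ card ?M" by (simp add: prod.distrib prod_if_const)
    also have "card ?M = ?n - 1 - 2 * des w"
    proof -
      have "?N \<union> ?LB \<union> ?M = {0..<?n}" by auto
      moreover have "?N \<inter> ?LB = {}" using nodd by auto
      moreover have "(?N \<union> ?LB) \<inter> ?M = {}" by auto
      ultimately have "card ?N + card ?LB + card ?M = ?n"
      proof -
        assume u: "?N \<union> ?LB \<union> ?M = {0..<?n}" and d1: "?N \<inter> ?LB = {}" and d2: "(?N \<union> ?LB) \<inter> ?M = {}"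
        have "card (?N \<union> ?LB \<union> ?M) = card (?N \<union> ?LB) + card ?M"
          by (rule card_Un_disjoint) (use d2 in auto)
        moreover have "card (?N \<union> ?LB) = card ?N + card ?LB"
          by (rule card_Un_disjoint) (use d1 in auto)
        ultimately show ?thesis unfolding u by simp
      qed
      thus ?thesis using cN cLB by simp
    qed
    finally show ?thesis using True cN by simp
  qed
  assume dd0: "dd w = 0"
  hence nodd: "\<And>i. i < ?n \<Longrightarrow> lb True w i \<Longrightarrow> rb True w i"
    using dd_lb_rb[OF d] by auto
  have "?N \<inter> ?LB = {}" using nodd by auto
  moreover have "?N \<union> ?LB \<subseteq> {0..<?n}" by auto
  ultimately have "card ?N + card ?LB \<le> ?n"
  proof -
    assume d1: "?N \<inter> ?LB = {}" and s: "?N \<union> ?LB \<subseteq> {0..<?n}"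
    have "card (?N \<union> ?LB) = card ?N + card ?LB"
      by (rule card_Un_disjoint) (use d1 in auto)
    moreover have "card (?N \<union> ?LB) \<le> card {0..<?n}" by (rule card_mono[OF _ s]) simp
    ultimately show ?thesis by simp
  qed
  thus "2 * des w + 1 \<le> ?n" using cN cLB by simp
qed

lemma poly_RHS: "poly (\<Sum>k\<in>{0..(n - 1) div 2}.
            smult (int (gammaS n k)) (monom 1 k * [:1, 1:] ^ (n - 1 - 2 * k))) t
   = (\<Sum>k\<in>{0..(n - 1) div 2}. of_nat (gammaS n k) * (t ^ k * (1 + t) ^ (n - 1 - 2 * k)))"
  unfolding poly_sum
proof (rule sum.cong[OF refl])
  fix k
  have "poly [:1, 1:] t = 1 + t" by simp
  thus "poly (smult (int (gammaS n k)) (monom 1 k * [:1, 1:] ^ (n - 1 - 2 * k))) t =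
         of_nat (gammaS n k) * (t ^ k * (1 + t) ^ (n - 1 - 2 * k))"
    by (simp only: poly_smult poly_mult poly_monom poly_power)
qed

lemma final_part:
  fixes n :: nat
  assumes eq0: "S_poly n = (\<Sum>k\<in>{0..(n - 1) div 2}.
            smult (int (gammaS n k)) (monom 1 k * [:1, 1:] ^ (n - 1 - 2 * k)))"
  shows "S_poly n = (\<Sum>k\<in>{0..(n - 1) div 2}.
            smult (int (gammaS n k)) (monom 1 k * [:1, 1:] ^ (n - 1 - 2 * k)))
       \<and> gamma_positive (S_poly n) (n - 1)
       \<and> palindromic (S_poly n) (n - 1)
       \<and> unimodal (S_poly n)"
proof -
  define RHS where "RHS = (\<Sum>k\<in>{0..(n - 1) div 2}.
            smult (int (gammaS n k)) (monom 1 k * [:1, 1:] ^ (n - 1 - 2 * k)))"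
  have eq: "S_poly n = RHS" using eq0 unfolding RHS_def .
  have g: "\<And>k. int (gammaS n k) \<ge> 0" by simp
  have gp: "gamma_positive (S_poly n) (n - 1)"
    unfolding gamma_positive_def
  proof (rule exI[of _ "\<lambda>k. int (gammaS n k)"], rule conjI)
    show "\<forall>k. 0 \<le> int (gammaS n k)" by simp
    show "S_poly n = (\<Sum>k = 0..(n - 1) div 2. smult (int (gammaS n k)) (monom 1 k * [:1, 1:] ^ (n - 1 - 2 * k)))"
      using eq0 .
  qed
  have pu: "palindromic RHS (n - 1)" "unimodal RHS"
    using gamma_props[where g="\<lambda>k. int (gammaS n k)" and p="RHS" and m="n - 1", OF g RHS_def] by blast+
  show ?thesis using eq eq0 gp pu by (simp only:)
qed

theorem theorem1p1:
  fixes n :: nat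
  assumes "n \<ge> 1"
  shows "S_poly n = (\<Sum>k\<in>{0..(n - 1) div 2}.
            smult (int (gammaS n k)) (monom 1 k * [:1, 1:] ^ (n - 1 - 2 * k)))
       \<and> gamma_positive (S_poly n) (n - 1)
       \<and> palindromic (S_poly n) (n - 1)
       \<and> unimodal (S_poly n)"
proof -
  define RHS where "RHS = (\<Sum>k\<in>{0..(n - 1) div 2}.
            smult (int (gammaS n k)) (monom 1 k * [:1, 1:] ^ (n - 1 - 2 * k)))"
  have wprops: "distinct w" "w \<noteq> []" "length w = n" if "w \<in> sep n" for w
    using that assms sep_iff perms_length[of w n] by (auto simp: perms_iff)
  have "poly (S_poly n) t = poly RHS t" for t
  proof -
    have "poly (S_poly n) t = (\<Sum>w\<in>sep n. t ^ des w)"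
      unfolding S_poly_def poly_sum by (rule sum.cong[OF refl]) (simp only: poly_monom mult_1)
    also have "\<dots> = Ssum (fw t 1 t) True True n"
      unfolding Ssum_def by (rule sum.cong[OF refl]) (rule wt_des[symmetric], rule wprops)
    also have "\<dots> = Ssum (fw t (1 + t) 0) True True n"
      by (rule Ssum_uv) (use assms in simp)
    also have "\<dots> = (\<Sum>w\<in>sep n. if dd w = 0 then t ^ des w * (1 + t) ^ (n - 1 - 2 * des w) else 0)"
      unfolding Ssum_def
    proof (rule sum.cong[OF refl])
      fix w assume w: "w \<in> sep n"
      show "wt (fw t (1 + t) 0) True True w = (if dd w = 0 then t ^ des w * (1 + t) ^ (n - 1 - 2 * des w) else 0)"
        using wt_dd(1)[OF wprops(1,2)[OF w], of t] unfolding wprops(3)[OF w] .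
    qed
    also have "\<dots> = (\<Sum>w\<in>{w\<in>sep n. dd w = 0}. t ^ des w * (1 + t) ^ (n - 1 - 2 * des w))"
      by (rule sum.inter_filter[symmetric, OF finite_sep])
    also have "\<dots> = (\<Sum>k\<in>{0..(n - 1) div 2}. \<Sum>w\<in>{x\<in>{w\<in>sep n. dd w = 0}. des x = k}.
                       t ^ des w * (1 + t) ^ (n - 1 - 2 * des w))"
    proof (rule sum.group[symmetric])
      show "finite {w\<in>sep n. dd w = 0}" using finite_sep by simp
      show "finite {0..(n - 1) div 2}" by simp
      show "des ` {w\<in>sep n. dd w = 0} \<subseteq> {0..(n - 1) div 2}"
      proof
        fix k assume "k \<in> des ` {w\<in>sep n. dd w = 0}"
        then obtain w where w: "w \<in> sep n" "dd w = 0" "k = des w" by auto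
        have "2 * des w + 1 \<le> n" using wt_dd(2)[OF wprops(1,2)[OF w(1)]] w wprops(3)[OF w(1)] by simp
        thus "k \<in> {0..(n - 1) div 2}" using w by auto
      qed
    qed
    also have "\<dots> = (\<Sum>k\<in>{0..(n - 1) div 2}. of_nat (gammaS n k) * (t ^ k * (1 + t) ^ (n - 1 - 2 * k)))"
    proof (rule sum.cong[OF refl])
      fix k
      have "(\<Sum>w\<in>{x\<in>{w\<in>sep n. dd w = 0}. des x = k}. t ^ des w * (1 + t) ^ (n - 1 - 2 * des w))
          = (\<Sum>w\<in>{w\<in>sep n. dd w = 0 \<and> des w = k}. t ^ k * (1 + t) ^ (n - 1 - 2 * k))"
        by (intro sum.cong) auto
      also have "\<dots> = of_nat (gammaS n k) * (t ^ k * (1 + t) ^ (n - 1 - 2 * k))"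
        unfolding gammaS_def by simp
      finally show "(\<Sum>w\<in>{x\<in>{w\<in>sep n. dd w = 0}. des x = k}. t ^ des w * (1 + t) ^ (n - 1 - 2 * des w))
          = of_nat (gammaS n k) * (t ^ k * (1 + t) ^ (n - 1 - 2 * k))" .
    qed
    also have "\<dots> = poly RHS t"
      unfolding RHS_def by (rule poly_RHS[symmetric])
    finally show ?thesis .
  qed
  hence eq: "S_poly n = RHS" using poly_eq_poly_eq_iff by blast
  thus ?thesis unfolding RHS_def by (rule final_part)
qed


end
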